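(* Let $(\mathcal{A},\mathbb{W},\mathfrak{s})$ be a weakly extriangulated category in which every inflation is a monomorphism and every deflation is an epimorphism. Let $\mathcal{W}$ be the class of conflations, i.e. of all sequences $A\xrightarrow{f}B\xrightarrow{g}C$ representing $\mathfrak{s}(\delta)$ for some $\delta\in\mathbb{W}(C,A)$. Then $\mathcal{W}$ is a weakly exact structure on $\mathcal{A}$.
   Context: Let $\mathcal{A}$ be an additive category. A weakly exact structure on $\mathcal{A}$ is a class $\mathcal{W}$ of kernel-cokernel pairs $A\xrightarrow{i}B\xrightarrow{d}C$ ($i$ a kernel of $d$, $d$ a cokernel of $i$), closed under isomorphisms and finite direct sums of sequences, with $1_A$ an admissible monic and an admissible epic for all $A$, such that pushouts of admissible monics (first maps of sequences in $\mathcal{W}$) along arbitrary morphisms exist and are admissible monics and pullbacks of admissible epics (second maps) along arbitrary morphisms exist and are admissible epics. For an additive bifunctor $\mathbb{E}:\mathcal{A}^{op}\times\mathcal{A}\to\mathrm{Ab}$ and $\delta\in\mathbb{E}(C,A)$, write $a_*\delta=\mathbb{E}(C,a)(\delta)$, $c^*\delta=\mathbb{E}(c,A)(\delta)$; a morphism of extensions is a pair $(a,c)$ with $a_*\delta=c^*\rho$. $g:B\to C$ is a weak cokernel of $f:A\to B$ if $\mathrm{Hom}(C,X)\to\mathrm{Hom}(B,X)\to\mathrm{Hom}(A,X)$ is exact for all $X$; weak kernels dually; a weak kernel-cokernel pair is $A\xrightarrow{f}B\xrightarrow{g}C$ with $f$ a weak kernel of $g$ and $g$ a weak cokernel of $f$.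 Two such pairs with the same end terms are equivalent if there is an isomorphism $b$ of middle terms with $(1_A,b,1_C)$ a chain map. A realization $\mathfrak{s}$ assigns to each $\delta\in\mathbb{E}(C,A)$ an equivalence class $[A\xrightarrow{f}B\xrightarrow{g}C]$ such that (R0) every morphism of extensions lifts to a chain map $(a,b,c)$ between representatives. It is exact if (R1) for each representative the sequences $\mathrm{Hom}(C,-)\to\mathrm{Hom}(B,-)\to\mathrm{Hom}(A,-)\xrightarrow{a\mapsto a_*\delta}\mathbb{E}(C,-)$ and $\mathrm{Hom}(-,A)\to\mathrm{Hom}(-,B)\to\mathrm{Hom}(-,C)\xrightarrow{c\mapsto c^*\delta}\mathbb{E}(-,A)$ are exact, and (R2) the zero elements of $\mathbb{E}(0,A)$, $\mathbb{E}(A,0)$ are realized by $[A\xrightarrow{1}A\to0]$, $[0\to A\xrightarrow{1}A]$. The mapping cone of a chain map $(1_A,b,c)$ from $A\xrightarrow{f}B\xrightarrow{g}C$ to $A\xrightarrow{f'}B'\xrightarrow{g'}C'$ is $B\xrightarrow{\left[\begin{smallmatrix}-g\\ b\end{smallmatrix}\right]}C\oplus B'\xrightarrow{[c\ \ g']}C'$; mapping cocones of $(a,b,1_C)$ dually. A weakly extriangulated category is $(\mathcal{A},\mathbb{E},\mathfrak{s})$ with $\mathfrak{s}$ an exact realization satisfying (EA2): for $\rho\in\mathbb{E}(C',A)$, $c:C\to C'$, realizations $A\xrightarrow{f}B\xrightarrow{g}C$ of $c^*\rho$ and $A\xrightarrow{f'}B'\xrightarrow{g'}C'$ of $\rho$,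 there is $b$ with $(1_A,b,c)$ a chain map whose mapping cone realizes $f_*\rho$; and the dual (EA2)$^{op}$. Conflations are representatives of classes $\mathfrak{s}(\delta)$; inflations and deflations are their first and second morphisms. *)

theory Defs
  imports "HOL-Algebra.Group"
begin

section \<open>Additive categories (encoded with explicit hom-sets)\<close>

record ('o,'m) precat =
  Ob    :: "'o set"
  Hom   :: "'o \<Rightarrow> 'o \<Rightarrow> 'm set"
  cmp   :: "'m \<Rightarrow> 'm \<Rightarrow> 'm"          (* cmp g f = g \<circ> f *)
  idm   :: "'o \<Rightarrow> 'm"
  hadd  :: "'o \<Rightarrow> 'o \<Rightarrow> 'm \<Rightarrow> 'm \<Rightarrow> 'm"
  hzero :: "'o \<Rightarrow> 'o \<Rightarrow> 'm"

definition hom_grp :: "('o,'m) precat \<Rightarrow> 'o \<Rightarrow> 'o \<Rightarrow> 'm monoid" where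
  "hom_grp K X Y = \<lparr>carrier = Hom K X Y, mult = hadd K X Y, one = hzero K X Y\<rparr>"

definition hneg :: "('o,'m) precat \<Rightarrow> 'o \<Rightarrow> 'o \<Rightarrow> 'm \<Rightarrow> 'm" where
  "hneg K X Y f = m_inv (hom_grp K X Y) f"

definition is_category :: "('o,'m) precat \<Rightarrow> bool" where
  "is_category K \<longleftrightarrow>
     (\<forall>X\<in>Ob K. idm K X \<in> Hom K X X) \<and>
     (\<forall>X\<in>Ob K. \<forall>Y\<in>Ob K. \<forall>Z\<in>Ob K. \<forall>f\<in>Hom K X Y. \<forall>g\<in>Hom K Y Z.
        cmp K g f \<in> Hom K X Z) \<and>
     (\<forall>W\<in>Ob K. \<forall>X\<in>Ob K. \<forall>Y\<in>Ob K. \<forall>Z\<in>Ob K.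
        \<forall>f\<in>Hom K W X. \<forall>g\<in>Hom K X Y. \<forall>h\<in>Hom K Y Z.
        cmp K h (cmp K g f) = cmp K (cmp K h g) f) \<and>
     (\<forall>X\<in>Ob K. \<forall>Y\<in>Ob K. \<forall>f\<in>Hom K X Y.
        cmp K (idm K Y) f = f \<and> cmp K f (idm K X) = f)"

definition preadditive :: "('o,'m) precat \<Rightarrow> bool" where
  "preadditive K \<longleftrightarrow> is_category K \<and>
     (\<forall>X\<in>Ob K. \<forall>Y\<in>Ob K. comm_group (hom_grp K X Y)) \<and>
     (\<forall>X\<in>Ob K. \<forall>Y\<in>Ob K. \<forall>Z\<in>Ob K.
        (\<forall>f\<in>Hom K X Y. \<forall>f'\<in>Hom K X Y. \<forall>g\<in>Hom K Y Z.
           cmp K g (hadd K X Y f f') = hadd K X Z (cmp K g f) (cmp K g f')) \<and>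
        (\<forall>f\<in>Hom K X Y. \<forall>g\<in>Hom K Y Z. \<forall>g'\<in>Hom K Y Z.
           cmp K (hadd K Y Z g g') f = hadd K X Z (cmp K g f) (cmp K g' f)))"

definition zero_obj :: "('o,'m) precat \<Rightarrow> 'o \<Rightarrow> bool" where
  "zero_obj K Z \<longleftrightarrow> Z \<in> Ob K \<and>
     (\<forall>X\<in>Ob K. (\<exists>!f. f \<in> Hom K Z X) \<and> (\<exists>!f. f \<in> Hom K X Z))"

definition biproduct ::
  "('o,'m) precat \<Rightarrow> 'o \<Rightarrow> 'o \<Rightarrow> 'o \<Rightarrow> 'm \<Rightarrow> 'm \<Rightarrow> 'm \<Rightarrow> 'm \<Rightarrow> bool" where
  "biproduct K X Y S i1 i2 p1 p2 \<longleftrightarrow> S \<in> Ob K \<and>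
     i1 \<in> Hom K X S \<and> i2 \<in> Hom K Y S \<and> p1 \<in> Hom K S X \<and> p2 \<in> Hom K S Y \<and>
     cmp K p1 i1 = idm K X \<and> cmp K p2 i2 = idm K Y \<and>
     cmp K p1 i2 = hzero K Y X \<and> cmp K p2 i1 = hzero K X Y \<and>
     hadd K S S (cmp K i1 p1) (cmp K i2 p2) = idm K S"

definition additive_category :: "('o,'m) precat \<Rightarrow> bool" where
  "additive_category K \<longleftrightarrow> preadditive K \<and> (\<exists>Z. zero_obj K Z) \<and>
     (\<forall>X\<in>Ob K. \<forall>Y\<in>Ob K. \<exists>S i1 i2 p1 p2. biproduct K X Y S i1 i2 p1 p2)"

definition is_mono :: "('o,'m) precat \<Rightarrow> 'o \<Rightarrow> 'o \<Rightarrow> 'm \<Rightarrow> bool" where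
  "is_mono K X Y f \<longleftrightarrow> f \<in> Hom K X Y \<and>
     (\<forall>W\<in>Ob K. \<forall>g\<in>Hom K W X. \<forall>h\<in>Hom K W X. cmp K f g = cmp K f h \<longrightarrow> g = h)"

definition is_epi :: "('o,'m) precat \<Rightarrow> 'o \<Rightarrow> 'o \<Rightarrow> 'm \<Rightarrow> bool" where
  "is_epi K X Y f \<longleftrightarrow> f \<in> Hom K X Y \<and>
     (\<forall>W\<in>Ob K. \<forall>g\<in>Hom K Y W. \<forall>h\<in>Hom K Y W. cmp K g f = cmp K h f \<longrightarrow> g = h)"

definition is_iso :: "('o,'m) precat \<Rightarrow> 'o \<Rightarrow> 'o \<Rightarrow> 'm \<Rightarrow> bool" where
  "is_iso K X Y f \<longleftrightarrow> f \<in> Hom K X Y \<and>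
     (\<exists>g\<in>Hom K Y X. cmp K g f = idm K X \<and> cmp K f g = idm K Y)"

section \<open>Three-term sequences\<close>

text \<open>A sequence A --f--> B --g--> C is the tuple (A, f, B, g, C).\<close>
type_synonym ('o,'m) seq = "'o \<times> 'm \<times> 'o \<times> 'm \<times> 'o"

definition is_kernel :: "('o,'m) precat \<Rightarrow> 'o \<Rightarrow> 'o \<Rightarrow> 'o \<Rightarrow> 'm \<Rightarrow> 'm \<Rightarrow> bool" where
  "is_kernel K A B C i d \<longleftrightarrow> i \<in> Hom K A B \<and> d \<in> Hom K B C \<and>
     cmp K d i = hzero K A C \<and>
     (\<forall>W\<in>Ob K. \<forall>x\<in>Hom K W B. cmp K d x = hzero K W C \<longrightarrow>
        (\<exists>!y. y \<in> Hom K W A \<and> cmp K i y = x))"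

definition is_cokernel :: "('o,'m) precat \<Rightarrow> 'o \<Rightarrow> 'o \<Rightarrow> 'o \<Rightarrow> 'm \<Rightarrow> 'm \<Rightarrow> bool" where
  "is_cokernel K A B C i d \<longleftrightarrow> i \<in> Hom K A B \<and> d \<in> Hom K B C \<and>
     cmp K d i = hzero K A C \<and>
     (\<forall>W\<in>Ob K. \<forall>x\<in>Hom K B W. cmp K x i = hzero K A W \<longrightarrow>
        (\<exists>!y. y \<in> Hom K C W \<and> cmp K y d = x))"

definition kc_pair :: "('o,'m) precat \<Rightarrow> ('o,'m) seq \<Rightarrow> bool" where
  "kc_pair K S = (case S of (A, i, B, d, C) \<Rightarrow>
     A \<in> Ob K \<and> B \<in> Ob K \<and> C \<in> Ob K \<and> is_kernel K A B C i d \<and> is_cokernel K A B C i d)"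

definition chain_map :: "('o,'m) precat \<Rightarrow> ('o,'m) seq \<Rightarrow> ('o,'m) seq \<Rightarrow> 'm \<Rightarrow> 'm \<Rightarrow> 'm \<Rightarrow> bool" where
  "chain_map K S S' a b c = (case S of (A, f, B, g, C) \<Rightarrow> case S' of (A', f', B', g', C') \<Rightarrow>
     A \<in> Ob K \<and> B \<in> Ob K \<and> C \<in> Ob K \<and> A' \<in> Ob K \<and> B' \<in> Ob K \<and> C' \<in> Ob K \<and>
     f \<in> Hom K A B \<and> g \<in> Hom K B C \<and> f' \<in> Hom K A' B' \<and> g' \<in> Hom K B' C' \<and>
     a \<in> Hom K A A' \<and> b \<in> Hom K B B' \<and> c \<in> Hom K C C' \<and>
     cmp K b f = cmp K f' a \<and> cmp K c g = cmp K g' b)"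

definition seq_iso :: "('o,'m) precat \<Rightarrow> ('o,'m) seq \<Rightarrow> ('o,'m) seq \<Rightarrow> bool" where
  "seq_iso K S S' = (case S of (A, f, B, g, C) \<Rightarrow> case S' of (A', f', B', g', C') \<Rightarrow>
     (\<exists>a b c. chain_map K S S' a b c \<and>
        is_iso K A A' a \<and> is_iso K B B' b \<and> is_iso K C C' c))"

section \<open>Weakly exact structures\<close>

definition adm_monic :: "('o,'m) precat \<Rightarrow> ('o,'m) seq set \<Rightarrow> 'o \<Rightarrow> 'm \<Rightarrow> 'o \<Rightarrow> bool" where
  "adm_monic K W A i B \<longleftrightarrow> (\<exists>d C. (A, i, B, d, C) \<in> W)"

definition adm_epic :: "('o,'m) precat \<Rightarrow> ('o,'m) seq set \<Rightarrow> 'o \<Rightarrow> 'm \<Rightarrow> 'o \<Rightarrow> bool" where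
  "adm_epic K W B d C \<longleftrightarrow> (\<exists>A i. (A, i, B, d, C) \<in> W)"

definition is_pushout ::
  "('o,'m) precat \<Rightarrow> 'o \<Rightarrow> 'o \<Rightarrow> 'o \<Rightarrow> 'o \<Rightarrow> 'm \<Rightarrow> 'm \<Rightarrow> 'm \<Rightarrow> 'm \<Rightarrow> bool" where
  "is_pushout K A B A' P f a f' a' \<longleftrightarrow> P \<in> Ob K \<and>
     f' \<in> Hom K A' P \<and> a' \<in> Hom K B P \<and> cmp K a' f = cmp K f' a \<and>
     (\<forall>X\<in>Ob K. \<forall>u\<in>Hom K B X. \<forall>v\<in>Hom K A' X. cmp K u f = cmp K v a \<longrightarrow>
        (\<exists>!w. w \<in> Hom K P X \<and> cmp K w a' = u \<and> cmp K w f' = v))"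

definition is_pullback ::
  "('o,'m) precat \<Rightarrow> 'o \<Rightarrow> 'o \<Rightarrow> 'o \<Rightarrow> 'o \<Rightarrow> 'm \<Rightarrow> 'm \<Rightarrow> 'm \<Rightarrow> 'm \<Rightarrow> bool" where
  "is_pullback K B C C' P d c d' c' \<longleftrightarrow> P \<in> Ob K \<and>
     d' \<in> Hom K P C' \<and> c' \<in> Hom K P B \<and> cmp K d c' = cmp K c d' \<and>
     (\<forall>X\<in>Ob K. \<forall>u\<in>Hom K X B. \<forall>v\<in>Hom K X C'. cmp K d u = cmp K c v \<longrightarrow>
        (\<exists>!w. w \<in> Hom K X P \<and> cmp K c' w = u \<and> cmp K d' w = v))"

definition closed_dsum :: "('o,'m) precat \<Rightarrow> ('o,'m) seq set \<Rightarrow> bool" where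
  "closed_dsum K W \<longleftrightarrow>
     (\<forall>A f B g C A' f' B' g' C'. (A, f, B, g, C) \<in> W \<longrightarrow> (A', f', B', g', C') \<in> W \<longrightarrow>
       (\<forall>SA ia1 ia2 qa1 qa2 SB ib1 ib2 qb1 qb2 SC ic1 ic2 qc1 qc2.
          biproduct K A A' SA ia1 ia2 qa1 qa2 \<and> biproduct K B B' SB ib1 ib2 qb1 qb2 \<and>
          biproduct K C C' SC ic1 ic2 qc1 qc2 \<longrightarrow>
          (SA, hadd K SA SB (cmp K ib1 (cmp K f qa1)) (cmp K ib2 (cmp K f' qa2)),
           SB, hadd K SB SC (cmp K ic1 (cmp K g qb1)) (cmp K ic2 (cmp K g' qb2)),
           SC) \<in> W)) \<and>
     (\<forall>Z. zero_obj K Z \<longrightarrow> (Z, hzero K Z Z, Z, hzero K Z Z, Z) \<in> W)"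

definition weakly_exact :: "('o,'m) precat \<Rightarrow> ('o,'m) seq set \<Rightarrow> bool" where
  "weakly_exact K W \<longleftrightarrow>
     (\<forall>S\<in>W. kc_pair K S) \<and>
     (\<forall>S S'. S \<in> W \<and> seq_iso K S S' \<longrightarrow> S' \<in> W) \<and>
     closed_dsum K W \<and>
     (\<forall>A\<in>Ob K. adm_monic K W A (idm K A) A \<and> adm_epic K W A (idm K A) A) \<and>
     (\<forall>A i B d C A' a. (A, i, B, d, C) \<in> W \<and> A' \<in> Ob K \<and> a \<in> Hom K A A' \<longrightarrow>
        (\<exists>P f' a'. is_pushout K A B A' P i a f' a' \<and> adm_monic K W A' f' P)) \<and>
     (\<forall>A i B d C C' c. (A, i, B, d, C) \<in> W \<and> C' \<in> Ob K \<and> c \<in> Hom K C' C \<longrightarrow>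
        (\<exists>P d' c'. is_pullback K B C C' P d c d' c' \<and> adm_epic K W P d' C'))"

section \<open>Additive bifunctors A^op \<times> A \<rightarrow> Ab\<close>

text \<open>Ecar E C A is the group E(C,A); Emap E C A C' A' c a : E(C,A) \<rightarrow> E(C',A')
  is E(c,a) for c : C' \<rightarrow> C and a : A \<rightarrow> A'.\<close>
record ('o,'m,'e) bifun =
  Ecar  :: "'o \<Rightarrow> 'o \<Rightarrow> 'e set"
  Eadd  :: "'o \<Rightarrow> 'o \<Rightarrow> 'e \<Rightarrow> 'e \<Rightarrow> 'e"
  Ezero :: "'o \<Rightarrow> 'o \<Rightarrow> 'e"
  Emap  :: "'o \<Rightarrow> 'o \<Rightarrow> 'o \<Rightarrow> 'o \<Rightarrow> 'm \<Rightarrow> 'm \<Rightarrow> 'e \<Rightarrow> 'e"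

definition ext_grp :: "('o,'m,'e) bifun \<Rightarrow> 'o \<Rightarrow> 'o \<Rightarrow> 'e monoid" where
  "ext_grp E C A = \<lparr>carrier = Ecar E C A, mult = Eadd E C A, one = Ezero E C A\<rparr>"

definition additive_bifunctor :: "('o,'m) precat \<Rightarrow> ('o,'m,'e) bifun \<Rightarrow> bool" where
  "additive_bifunctor K E \<longleftrightarrow>
     (\<forall>C\<in>Ob K. \<forall>A\<in>Ob K. comm_group (ext_grp E C A)) \<and>
     (\<forall>C\<in>Ob K. \<forall>A\<in>Ob K. \<forall>C'\<in>Ob K. \<forall>A'\<in>Ob K. \<forall>c\<in>Hom K C' C. \<forall>a\<in>Hom K A A'.
        (\<forall>\<delta>\<in>Ecar E C A. Emap E C A C' A' c a \<delta> \<in> Ecar E C' A') \<and>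
        (\<forall>\<delta>\<in>Ecar E C A. \<forall>\<delta>'\<in>Ecar E C A.
           Emap E C A C' A' c a (Eadd E C A \<delta> \<delta>') =
           Eadd E C' A' (Emap E C A C' A' c a \<delta>) (Emap E C A C' A' c a \<delta>'))) \<and>
     (\<forall>C\<in>Ob K. \<forall>A\<in>Ob K. \<forall>\<delta>\<in>Ecar E C A. Emap E C A C A (idm K C) (idm K A) \<delta> = \<delta>) \<and>
     (\<forall>C\<in>Ob K. \<forall>A\<in>Ob K. \<forall>C'\<in>Ob K. \<forall>A'\<in>Ob K. \<forall>C''\<in>Ob K. \<forall>A''\<in>Ob K.
        \<forall>c\<in>Hom K C' C. \<forall>a\<in>Hom K A A'. \<forall>c'\<in>Hom K C'' C'. \<forall>a'\<in>Hom K A' A''.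
        \<forall>\<delta>\<in>Ecar E C A.
          Emap E C' A' C'' A'' c' a' (Emap E C A C' A' c a \<delta>) =
          Emap E C A C'' A'' (cmp K c c') (cmp K a' a) \<delta>) \<and>
     (\<forall>C\<in>Ob K. \<forall>A\<in>Ob K. \<forall>C'\<in>Ob K. \<forall>c1\<in>Hom K C' C. \<forall>c2\<in>Hom K C' C. \<forall>\<delta>\<in>Ecar E C A.
        Emap E C A C' A (hadd K C' C c1 c2) (idm K A) \<delta> =
        Eadd E C' A (Emap E C A C' A c1 (idm K A) \<delta>) (Emap E C A C' A c2 (idm K A) \<delta>)) \<and>
     (\<forall>C\<in>Ob K. \<forall>A\<in>Ob K. \<forall>A'\<in>Ob K. \<forall>a1\<in>Hom K A A'. \<forall>a2\<in>Hom K A A'. \<forall>\<delta>\<in>Ecar E C A.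
        Emap E C A C A' (idm K C) (hadd K A A' a1 a2) \<delta> =
        Eadd E C A' (Emap E C A C A' (idm K C) a1 \<delta>) (Emap E C A C A' (idm K C) a2 \<delta>))"

text \<open>a_* \<delta> for \<delta> \<in> E(C,A), a : A \<rightarrow> A'; and c^* \<rho> for \<rho> \<in> E(C,A), c : C' \<rightarrow> C.\<close>
definition pushE :: "('o,'m) precat \<Rightarrow> ('o,'m,'e) bifun \<Rightarrow> 'o \<Rightarrow> 'o \<Rightarrow> 'o \<Rightarrow> 'm \<Rightarrow> 'e \<Rightarrow> 'e" where
  "pushE K E C A A' a \<delta> = Emap E C A C A' (idm K C) a \<delta>"

definition pullE :: "('o,'m) precat \<Rightarrow> ('o,'m,'e) bifun \<Rightarrow> 'o \<Rightarrow> 'o \<Rightarrow> 'o \<Rightarrow> 'm \<Rightarrow> 'e \<Rightarrow> 'e" where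
  "pullE K E C C' A c \<rho> = Emap E C A C' A c (idm K A) \<rho>"

section \<open>Realizations and weakly extriangulated categories\<close>

definition weak_cokernel :: "('o,'m) precat \<Rightarrow> 'o \<Rightarrow> 'o \<Rightarrow> 'o \<Rightarrow> 'm \<Rightarrow> 'm \<Rightarrow> bool" where
  "weak_cokernel K A B C f g \<longleftrightarrow> (\<forall>X\<in>Ob K.
     {cmp K y g | y. y \<in> Hom K C X} = {x \<in> Hom K B X. cmp K x f = hzero K A X})"

definition weak_kernel :: "('o,'m) precat \<Rightarrow> 'o \<Rightarrow> 'o \<Rightarrow> 'o \<Rightarrow> 'm \<Rightarrow> 'm \<Rightarrow> bool" where
  "weak_kernel K A B C f g \<longleftrightarrow> (\<forall>X\<in>Ob K.
     {cmp K f y | y. y \<in> Hom K X A} = {x \<in> Hom K X B. cmp K g x = hzero K X C})"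

definition weak_kc_pair :: "('o,'m) precat \<Rightarrow> ('o,'m) seq \<Rightarrow> bool" where
  "weak_kc_pair K S = (case S of (A, f, B, g, C) \<Rightarrow>
     A \<in> Ob K \<and> B \<in> Ob K \<and> C \<in> Ob K \<and> f \<in> Hom K A B \<and> g \<in> Hom K B C \<and>
     weak_kernel K A B C f g \<and> weak_cokernel K A B C f g)"

definition seq_equiv :: "('o,'m) precat \<Rightarrow> ('o,'m) seq \<Rightarrow> ('o,'m) seq \<Rightarrow> bool" where
  "seq_equiv K S S' = (case S of (A, f, B, g, C) \<Rightarrow> case S' of (A', f', B', g', C') \<Rightarrow>
     A = A' \<and> C = C' \<and> (\<exists>b. is_iso K B B' b \<and> chain_map K S S' (idm K A) b (idm K C)))"

text \<open>s C A \<delta> is the class realizing \<delta> \<in> E(C,A).\<close>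
type_synonym ('o,'m,'e) realiz = "'o \<Rightarrow> 'o \<Rightarrow> 'e \<Rightarrow> ('o,'m) seq set"

definition realization :: "('o,'m) precat \<Rightarrow> ('o,'m,'e) bifun \<Rightarrow> ('o,'m,'e) realiz \<Rightarrow> bool" where
  "realization K E s \<longleftrightarrow>
     (\<forall>C\<in>Ob K. \<forall>A\<in>Ob K. \<forall>\<delta>\<in>Ecar E C A. \<exists>f B g.
        weak_kc_pair K (A, f, B, g, C) \<and>
        s C A \<delta> = {S'. weak_kc_pair K S' \<and> seq_equiv K (A, f, B, g, C) S'}) \<and>
     (\<forall>C\<in>Ob K. \<forall>A\<in>Ob K. \<forall>C'\<in>Ob K. \<forall>A'\<in>Ob K. \<forall>\<delta>\<in>Ecar E C A. \<forall>\<rho>\<in>Ecar E C' A'.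
        \<forall>a\<in>Hom K A A'. \<forall>c\<in>Hom K C C'.
        pushE K E C A A' a \<delta> = pullE K E C' C A' c \<rho> \<longrightarrow>
        (\<forall>S\<in>s C A \<delta>. \<forall>S'\<in>s C' A' \<rho>. \<exists>b. chain_map K S S' a b c))"

definition exact_realization :: "('o,'m) precat \<Rightarrow> ('o,'m,'e) bifun \<Rightarrow> ('o,'m,'e) realiz \<Rightarrow> bool" where
  "exact_realization K E s \<longleftrightarrow> realization K E s \<and>
     (\<forall>C\<in>Ob K. \<forall>A\<in>Ob K. \<forall>\<delta>\<in>Ecar E C A. \<forall>f B g. (A, f, B, g, C) \<in> s C A \<delta> \<longrightarrow>
        (\<forall>X\<in>Ob K.
           {cmp K y g | y. y \<in> Hom K C X} = {x \<in> Hom K B X. cmp K x f = hzero K A X} \<and>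
           {cmp K x f | x. x \<in> Hom K B X} = {a \<in> Hom K A X. pushE K E C A X a \<delta> = Ezero E C X} \<and>
           {cmp K f y | y. y \<in> Hom K X A} = {x \<in> Hom K X B. cmp K g x = hzero K X C} \<and>
           {cmp K g y | y. y \<in> Hom K X B} = {c \<in> Hom K X C. pullE K E C X A c \<delta> = Ezero E X A})) \<and>
     (\<forall>Z. zero_obj K Z \<longrightarrow> (\<forall>A\<in>Ob K.
        (A, idm K A, A, hzero K A Z, Z) \<in> s Z A (Ezero E Z A) \<and>
        (Z, hzero K Z A, A, idm K A, A) \<in> s A Z (Ezero E A Z)))"

text \<open>Mapping cone of (1_A, b, c) from A-f->B-g->C to A-f'->B'-g'->C', using the biproduct
  (S,i1,i2,p1,p2) of C and B':  B --[-g; b]--> C \<oplus> B' --[c g']--> C'.\<close>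
definition mcone ::
  "('o,'m) precat \<Rightarrow> 'o \<Rightarrow> 'o \<Rightarrow> 'o \<Rightarrow> 'm \<Rightarrow> 'm \<Rightarrow> 'm \<Rightarrow> 'm \<Rightarrow>
   'o \<Rightarrow> 'm \<Rightarrow> 'm \<Rightarrow> 'm \<Rightarrow> 'm \<Rightarrow> ('o,'m) seq" where
  "mcone K B C C' g b c g' S i1 i2 p1 p2 =
     (B, hadd K B S (cmp K i1 (hneg K B C g)) (cmp K i2 b),
      S, hadd K S C' (cmp K c p1) (cmp K g' p2), C')"

text \<open>Mapping cocone of (a, b, 1_C) from A'-f'->B'-g'->C to A-f->B-g->C, using the biproduct
  (S,i1,i2,p1,p2) of A and B':  A' --[a; f']--> A \<oplus> B' --[-f b]--> B.\<close>
definition mcocone ::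
  "('o,'m) precat \<Rightarrow> 'o \<Rightarrow> 'o \<Rightarrow> 'o \<Rightarrow> 'm \<Rightarrow> 'm \<Rightarrow> 'm \<Rightarrow> 'm \<Rightarrow>
   'o \<Rightarrow> 'm \<Rightarrow> 'm \<Rightarrow> 'm \<Rightarrow> 'm \<Rightarrow> ('o,'m) seq" where
  "mcocone K A' A B a f' f b S i1 i2 p1 p2 =
     (A', hadd K A' S (cmp K i1 a) (cmp K i2 f'),
      S, hadd K S B (cmp K (hneg K A B f) p1) (cmp K b p2), B)"

definition EA2 :: "('o,'m) precat \<Rightarrow> ('o,'m,'e) bifun \<Rightarrow> ('o,'m,'e) realiz \<Rightarrow> bool" where
  "EA2 K E s \<longleftrightarrow>
     (\<forall>C'\<in>Ob K. \<forall>A\<in>Ob K. \<forall>C\<in>Ob K. \<forall>\<rho>\<in>Ecar E C' A. \<forall>c\<in>Hom K C C'.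
        \<forall>f B g f' B' g'.
          (A, f, B, g, C) \<in> s C A (pullE K E C' C A c \<rho>) \<and> (A, f', B', g', C') \<in> s C' A \<rho> \<longrightarrow>
          (\<exists>b. chain_map K (A, f, B, g, C) (A, f', B', g', C') (idm K A) b c \<and>
             (\<forall>S i1 i2 p1 p2. biproduct K C B' S i1 i2 p1 p2 \<longrightarrow>
                mcone K B C C' g b c g' S i1 i2 p1 p2 \<in> s C' B (pushE K E C' A B f \<rho>))))"

definition EA2op :: "('o,'m) precat \<Rightarrow> ('o,'m,'e) bifun \<Rightarrow> ('o,'m,'e) realiz \<Rightarrow> bool" where
  "EA2op K E s \<longleftrightarrow>
     (\<forall>C\<in>Ob K. \<forall>A'\<in>Ob K. \<forall>A\<in>Ob K. \<forall>\<delta>\<in>Ecar E C A'. \<forall>a\<in>Hom K A' A.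
        \<forall>f B g f' B' g'.
          (A, f, B, g, C) \<in> s C A (pushE K E C A' A a \<delta>) \<and> (A', f', B', g', C) \<in> s C A' \<delta> \<longrightarrow>
          (\<exists>b. chain_map K (A', f', B', g', C) (A, f, B, g, C) a b (idm K C) \<and>
             (\<forall>S i1 i2 p1 p2. biproduct K A B' S i1 i2 p1 p2 \<longrightarrow>
                mcocone K A' A B a f' f b S i1 i2 p1 p2 \<in> s B A' (pullE K E C B A' g \<delta>))))"

definition weakly_extriangulated ::
  "('o,'m) precat \<Rightarrow> ('o,'m,'e) bifun \<Rightarrow> ('o,'m,'e) realiz \<Rightarrow> bool" where
  "weakly_extriangulated K E s \<longleftrightarrow> additive_category K \<and> additive_bifunctor K E \<and>
     exact_realization K E s \<and> EA2 K E s \<and> EA2op K E s"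

definition conflations :: "('o,'m) precat \<Rightarrow> ('o,'m,'e) bifun \<Rightarrow> ('o,'m,'e) realiz \<Rightarrow> ('o,'m) seq set" where
  "conflations K E s = {S. \<exists>C\<in>Ob K. \<exists>A\<in>Ob K. \<exists>\<delta>\<in>Ecar E C A. S \<in> s C A \<delta>}"

end

theory Submission
  imports Defs
begin


locale padd =
  fixes K :: "('o,'m) precat"
  assumes pre: "preadditive K"
begin

lemma cat: "is_category K" using pre unfolding preadditive_def by blast

lemma idm_hom[simp]: "X \<in> Ob K \<Longrightarrow> idm K X \<in> Hom K X X"
  using cat unfolding is_category_def by blast

lemma cmp_hom: "\<lbrakk>X\<in>Ob K; Y\<in>Ob K; Z\<in>Ob K; f\<in>Hom K X Y; g\<in>Hom K Y Z\<rbrakk> \<Longrightarrow> cmp K g f \<in> Hom K X Z"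
  using cat unfolding is_category_def by blast

lemma assoc: "\<lbrakk>W\<in>Ob K; X\<in>Ob K; Y\<in>Ob K; Z\<in>Ob K; f\<in>Hom K W X; g\<in>Hom K X Y; h\<in>Hom K Y Z\<rbrakk>
   \<Longrightarrow> cmp K (cmp K h g) f = cmp K h (cmp K g f)"
  using cat unfolding is_category_def by metis

lemma idl[simp]: "\<lbrakk>X\<in>Ob K; Y\<in>Ob K; f\<in>Hom K X Y\<rbrakk> \<Longrightarrow> cmp K (idm K Y) f = f"
  using cat unfolding is_category_def by blast
lemma idr[simp]: "\<lbrakk>X\<in>Ob K; Y\<in>Ob K; f\<in>Hom K X Y\<rbrakk> \<Longrightarrow> cmp K f (idm K X) = f"
  using cat unfolding is_category_def by blast

lemma grp: "X\<in>Ob K \<Longrightarrow> Y\<in>Ob K \<Longrightarrow> comm_group (hom_grp K X Y)"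
  using pre unfolding preadditive_def by blast

lemma add_hom: "\<lbrakk>X\<in>Ob K; Y\<in>Ob K; f\<in>Hom K X Y; g\<in>Hom K X Y\<rbrakk> \<Longrightarrow> hadd K X Y f g \<in> Hom K X Y"
  using comm_group.axioms(2)[OF grp, THEN group.is_monoid, THEN monoid.m_closed, of X Y] by (simp add: hom_grp_def)
lemma zero_hom[simp]: "\<lbrakk>X\<in>Ob K; Y\<in>Ob K\<rbrakk> \<Longrightarrow> hzero K X Y \<in> Hom K X Y"
  using comm_group.axioms(2)[OF grp, THEN group.is_monoid, THEN monoid.one_closed, of X Y] by (simp add: hom_grp_def)
lemma neg_hom: "\<lbrakk>X\<in>Ob K; Y\<in>Ob K; f\<in>Hom K X Y\<rbrakk> \<Longrightarrow> hneg K X Y f \<in> Hom K X Y"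
  using comm_group.axioms(2)[OF grp, THEN group.inv_closed, of X Y] by (simp add: hom_grp_def hneg_def)
lemma add_assoc: "\<lbrakk>X\<in>Ob K; Y\<in>Ob K; f\<in>Hom K X Y; g\<in>Hom K X Y; h\<in>Hom K X Y\<rbrakk> \<Longrightarrow>
   hadd K X Y (hadd K X Y f g) h = hadd K X Y f (hadd K X Y g h)"
  using comm_group.axioms(2)[OF grp, THEN group.is_monoid, THEN monoid.m_assoc, of X Y] by (simp add: hom_grp_def)
lemma add_comm: "\<lbrakk>X\<in>Ob K; Y\<in>Ob K; f\<in>Hom K X Y; g\<in>Hom K X Y\<rbrakk> \<Longrightarrow>
   hadd K X Y f g = hadd K X Y g f"
  using comm_group.axioms(1)[OF grp, THEN comm_monoid.m_comm, of X Y] by (simp add: hom_grp_def)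
lemma add_0l[simp]: "\<lbrakk>X\<in>Ob K; Y\<in>Ob K; f\<in>Hom K X Y\<rbrakk> \<Longrightarrow> hadd K X Y (hzero K X Y) f = f"
  using comm_group.axioms(2)[OF grp, THEN group.is_monoid, THEN monoid.l_one, of X Y] by (simp add: hom_grp_def)
lemma add_0r[simp]: "\<lbrakk>X\<in>Ob K; Y\<in>Ob K; f\<in>Hom K X Y\<rbrakk> \<Longrightarrow> hadd K X Y f (hzero K X Y) = f"
  using comm_group.axioms(2)[OF grp, THEN group.is_monoid, THEN monoid.r_one, of X Y] by (simp add: hom_grp_def)
lemma add_negr[simp]: "\<lbrakk>X\<in>Ob K; Y\<in>Ob K; f\<in>Hom K X Y\<rbrakk> \<Longrightarrow> hadd K X Y f (hneg K X Y f) = hzero K X Y"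
  using comm_group.axioms(2)[OF grp, THEN group.r_inv, of X Y] by (simp add: hom_grp_def hneg_def)
lemma add_negl[simp]: "\<lbrakk>X\<in>Ob K; Y\<in>Ob K; f\<in>Hom K X Y\<rbrakk> \<Longrightarrow> hadd K X Y (hneg K X Y f) f = hzero K X Y"
  using comm_group.axioms(2)[OF grp, THEN group.l_inv, of X Y] by (simp add: hom_grp_def hneg_def)
lemma idem_zero: "\<lbrakk>X\<in>Ob K; Y\<in>Ob K; f\<in>Hom K X Y; hadd K X Y f f = f\<rbrakk> \<Longrightarrow> f = hzero K X Y"
  using comm_group.axioms(2)[OF grp, THEN group.l_cancel_one, of X Y f f] by (simp add: hom_grp_def)
lemma neg_unique: "\<lbrakk>X\<in>Ob K; Y\<in>Ob K; f\<in>Hom K X Y; g\<in>Hom K X Y; hadd K X Y f g = hzero K X Y\<rbrakk> \<Longrightarrow> g = hneg K X Y f"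
  using comm_group.axioms(2)[OF grp, THEN group.inv_equality, of X Y g f]
  by (simp add: hom_grp_def hneg_def add_comm[of X Y f g])

lemma distl: "\<lbrakk>X\<in>Ob K; Y\<in>Ob K; Z\<in>Ob K; f\<in>Hom K X Y; f'\<in>Hom K X Y; g\<in>Hom K Y Z\<rbrakk> \<Longrightarrow>
   cmp K g (hadd K X Y f f') = hadd K X Z (cmp K g f) (cmp K g f')"
  using pre unfolding preadditive_def by blast
lemma distr: "\<lbrakk>X\<in>Ob K; Y\<in>Ob K; Z\<in>Ob K; f\<in>Hom K X Y; g\<in>Hom K Y Z; g'\<in>Hom K Y Z\<rbrakk> \<Longrightarrow>
   cmp K (hadd K Y Z g g') f = hadd K X Z (cmp K g f) (cmp K g' f)"
  using pre unfolding preadditive_def by blast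

lemma cmp_0r[simp]: "\<lbrakk>X\<in>Ob K; Y\<in>Ob K; Z\<in>Ob K; g\<in>Hom K Y Z\<rbrakk> \<Longrightarrow> cmp K g (hzero K X Y) = hzero K X Z"
  apply (rule idem_zero[of X Z])
  using distl[of X Y Z "hzero K X Y" "hzero K X Y" g] cmp_hom[of X Y Z "hzero K X Y" g] by auto
lemma cmp_0l[simp]: "\<lbrakk>X\<in>Ob K; Y\<in>Ob K; Z\<in>Ob K; f\<in>Hom K X Y\<rbrakk> \<Longrightarrow> cmp K (hzero K Y Z) f = hzero K X Z"
  apply (rule idem_zero[of X Z])
  using distr[of X Y Z f "hzero K Y Z" "hzero K Y Z"] cmp_hom[of X Y Z f "hzero K Y Z"] by auto

lemma cmp_negr: "\<lbrakk>X\<in>Ob K; Y\<in>Ob K; Z\<in>Ob K; f\<in>Hom K X Y; g\<in>Hom K Y Z\<rbrakk> \<Longrightarrow>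
   cmp K g (hneg K X Y f) = hneg K X Z (cmp K g f)"
  apply (rule neg_unique)
  using distl[of X Y Z f "hneg K X Y f" g] cmp_hom[of X Y Z _ g] neg_hom[of X Y f] by auto
lemma cmp_negl: "\<lbrakk>X\<in>Ob K; Y\<in>Ob K; Z\<in>Ob K; f\<in>Hom K X Y; g\<in>Hom K Y Z\<rbrakk> \<Longrightarrow>
   cmp K (hneg K Y Z g) f = hneg K X Z (cmp K g f)"
  apply (rule neg_unique)
  using distr[of X Y Z f g "hneg K Y Z g"] cmp_hom[of X Y Z f] neg_hom[of Y Z g] by auto

lemma neg_neg[simp]: "\<lbrakk>X\<in>Ob K; Y\<in>Ob K; f\<in>Hom K X Y\<rbrakk> \<Longrightarrow> hneg K X Y (hneg K X Y f) = f"
  by (metis add_negl neg_hom neg_unique)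

lemma bpD: assumes "biproduct K X Y S i1 i2 p1 p2"
  shows "S \<in> Ob K" "i1 \<in> Hom K X S" "i2 \<in> Hom K Y S" "p1 \<in> Hom K S X" "p2 \<in> Hom K S Y"
    "cmp K p1 i1 = idm K X" "cmp K p2 i2 = idm K Y" "cmp K p1 i2 = hzero K Y X" "cmp K p2 i1 = hzero K X Y"
    "hadd K S S (cmp K i1 p1) (cmp K i2 p2) = idm K S"
  using assms unfolding biproduct_def by auto

lemma bp_outext: assumes bp: "biproduct K X Y S i1 i2 p1 p2" and ob: "X\<in>Ob K" "Y\<in>Ob K" "W\<in>Ob K"
  and h: "h \<in> Hom K S W" "h' \<in> Hom K S W" and e1: "cmp K h i1 = cmp K h' i1" and e2: "cmp K h i2 = cmp K h' i2"
  shows "h = h'"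
proof -
  note b = bpD[OF bp]
  have "\<And>h. h \<in> Hom K S W \<Longrightarrow> h = hadd K S W (cmp K (cmp K h i1) p1) (cmp K (cmp K h i2) p2)"
  proof -
    fix h assume h: "h \<in> Hom K S W"
    have h1: "cmp K i1 p1 \<in> Hom K S S" by (rule cmp_hom[of S X S]) (use b ob in auto)
    have h2: "cmp K i2 p2 \<in> Hom K S S" by (rule cmp_hom[of S Y S]) (use b ob in auto)
    have "h = cmp K h (idm K S)" using h b ob by simp
    also have "\<dots> = hadd K S W (cmp K h (cmp K i1 p1)) (cmp K h (cmp K i2 p2))"
      using b(10) distl[of S S W "cmp K i1 p1" "cmp K i2 p2" h] h1 h2 b ob h by simp
    also have "\<dots> = hadd K S W (cmp K (cmp K h i1) p1) (cmp K (cmp K h i2) p2)"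
      using assoc[of S X S W p1 i1 h] assoc[of S Y S W p2 i2 h] b ob h by simp
    finally show "h = \<dots>" .
  qed
  from this[OF h(1)] this[OF h(2)] e1 e2 show ?thesis by simp
qed

lemma bp_inext: assumes bp: "biproduct K X Y S i1 i2 p1 p2" and ob: "X\<in>Ob K" "Y\<in>Ob K" "W\<in>Ob K"
  and h: "h \<in> Hom K W S" "h' \<in> Hom K W S" and e1: "cmp K p1 h = cmp K p1 h'" and e2: "cmp K p2 h = cmp K p2 h'"
  shows "h = h'"
proof -
  note b = bpD[OF bp]
  have "\<And>h. h \<in> Hom K W S \<Longrightarrow> h = hadd K W S (cmp K i1 (cmp K p1 h)) (cmp K i2 (cmp K p2 h))"
  proof -
    fix h assume h: "h \<in> Hom K W S"
    have h1: "cmp K i1 p1 \<in> Hom K S S" by (rule cmp_hom[of S X S]) (use b ob in auto)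
    have h2: "cmp K i2 p2 \<in> Hom K S S" by (rule cmp_hom[of S Y S]) (use b ob in auto)
    have "h = cmp K (idm K S) h" using h b ob by simp
    also have "\<dots> = hadd K W S (cmp K (cmp K i1 p1) h) (cmp K (cmp K i2 p2) h)"
      using b(10) distr[of W S S h "cmp K i1 p1" "cmp K i2 p2"] h1 h2 b ob h by simp
    also have "\<dots> = hadd K W S (cmp K i1 (cmp K p1 h)) (cmp K i2 (cmp K p2 h))"
      using assoc[of W S X S h p1 i1] assoc[of W S Y S h p2 i2] b ob h by simp
    finally show "h = \<dots>" .
  qed
  from this[OF h(1)] this[OF h(2)] e1 e2 show ?thesis by simp
qed

lemma copair: assumes bp: "biproduct K X Y S i1 i2 p1 p2" and ob: "X\<in>Ob K" "Y\<in>Ob K" "W\<in>Ob K"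
  and ab: "a \<in> Hom K X W" "b \<in> Hom K Y W"
  shows "hadd K S W (cmp K a p1) (cmp K b p2) \<in> Hom K S W"
    "cmp K (hadd K S W (cmp K a p1) (cmp K b p2)) i1 = a"
    "cmp K (hadd K S W (cmp K a p1) (cmp K b p2)) i2 = b"
proof -
  note b = bpD[OF bp]
  have h1: "cmp K a p1 \<in> Hom K S W" by (rule cmp_hom[of S X W]) (use b ob ab in auto)
  have h2: "cmp K b p2 \<in> Hom K S W" by (rule cmp_hom[of S Y W]) (use b ob ab in auto)
  show "hadd K S W (cmp K a p1) (cmp K b p2) \<in> Hom K S W"
    using add_hom[OF b(1) ob(3) h1 h2] .
  have "cmp K (hadd K S W (cmp K a p1) (cmp K b p2)) i1 = hadd K X W (cmp K (cmp K a p1) i1) (cmp K (cmp K b p2) i1)"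
    using distr[of X S W i1 "cmp K a p1" "cmp K b p2"] h1 h2 b ob by simp
  also have "\<dots> = hadd K X W (cmp K a (cmp K p1 i1)) (cmp K b (cmp K p2 i1))"
    using assoc[of X S X W i1 p1 a] assoc[of X S Y W i1 p2 b] b ob ab by simp
  also have "\<dots> = a" using b ob ab by simp
  finally show "cmp K (hadd K S W (cmp K a p1) (cmp K b p2)) i1 = a" .
  have "cmp K (hadd K S W (cmp K a p1) (cmp K b p2)) i2 = hadd K Y W (cmp K (cmp K a p1) i2) (cmp K (cmp K b p2) i2)"
    using distr[of Y S W i2 "cmp K a p1" "cmp K b p2"] h1 h2 b ob by simp
  also have "\<dots> = hadd K Y W (cmp K a (cmp K p1 i2)) (cmp K b (cmp K p2 i2))"
    using assoc[of Y S X W i2 p1 a] assoc[of Y S Y W i2 p2 b] b ob ab by simp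
  also have "\<dots> = b" using b ob ab by simp
  finally show "cmp K (hadd K S W (cmp K a p1) (cmp K b p2)) i2 = b" .
qed

lemma pair: assumes bp: "biproduct K X Y S i1 i2 p1 p2" and ob: "X\<in>Ob K" "Y\<in>Ob K" "W\<in>Ob K"
  and ab: "a \<in> Hom K W X" "b \<in> Hom K W Y"
  shows "hadd K W S (cmp K i1 a) (cmp K i2 b) \<in> Hom K W S"
    "cmp K p1 (hadd K W S (cmp K i1 a) (cmp K i2 b)) = a"
    "cmp K p2 (hadd K W S (cmp K i1 a) (cmp K i2 b)) = b"
proof -
  note b = bpD[OF bp]
  have h1: "cmp K i1 a \<in> Hom K W S" by (rule cmp_hom[of W X S]) (use b ob ab in auto)
  have h2: "cmp K i2 b \<in> Hom K W S" by (rule cmp_hom[of W Y S]) (use b ob ab in auto)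
  show "hadd K W S (cmp K i1 a) (cmp K i2 b) \<in> Hom K W S"
    using add_hom[OF ob(3) b(1) h1 h2] .
  have "cmp K p1 (hadd K W S (cmp K i1 a) (cmp K i2 b)) = hadd K W X (cmp K p1 (cmp K i1 a)) (cmp K p1 (cmp K i2 b))"
    using distl[of W S X "cmp K i1 a" "cmp K i2 b" p1] h1 h2 b ob by simp
  also have "\<dots> = hadd K W X (cmp K (cmp K p1 i1) a) (cmp K (cmp K p1 i2) b)"
    using assoc[of W X S X a i1 p1] assoc[of W Y S X b i2 p1] b ob ab by simp
  also have "\<dots> = a" using b ob ab by simp
  finally show "cmp K p1 (hadd K W S (cmp K i1 a) (cmp K i2 b)) = a" .
  have "cmp K p2 (hadd K W S (cmp K i1 a) (cmp K i2 b)) = hadd K W Y (cmp K p2 (cmp K i1 a)) (cmp K p2 (cmp K i2 b))"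
    using distl[of W S Y "cmp K i1 a" "cmp K i2 b" p2] h1 h2 b ob by simp
  also have "\<dots> = hadd K W Y (cmp K (cmp K p2 i1) a) (cmp K (cmp K p2 i2) b)"
    using assoc[of W X S Y a i1 p2] assoc[of W Y S Y b i2 p2] b ob ab by simp
  also have "\<dots> = b" using b ob ab by simp
  finally show "cmp K p2 (hadd K W S (cmp K i1 a) (cmp K i2 b)) = b" .
qed

end

context padd begin

lemma wkcD: assumes "weak_kc_pair K (A,f,B,g,C)"
  shows "A\<in>Ob K" "B\<in>Ob K" "C\<in>Ob K" "f\<in>Hom K A B" "g\<in>Hom K B C" "cmp K g f = hzero K A C"
    "\<And>X x. X\<in>Ob K \<Longrightarrow> x\<in>Hom K X B \<Longrightarrow> cmp K g x = hzero K X C \<Longrightarrow> \<exists>y\<in>Hom K X A. x = cmp K f y"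
    "\<And>X x. X\<in>Ob K \<Longrightarrow> x\<in>Hom K B X \<Longrightarrow> cmp K x f = hzero K A X \<Longrightarrow> \<exists>y\<in>Hom K C X. x = cmp K y g"
proof -
  note a = assms[unfolded weak_kc_pair_def, simplified]
  show o: "A\<in>Ob K" "B\<in>Ob K" "C\<in>Ob K" "f\<in>Hom K A B" "g\<in>Hom K B C" using a by auto
  have wk: "\<And>X. X\<in>Ob K \<Longrightarrow> {cmp K f y | y. y \<in> Hom K X A} = {x \<in> Hom K X B. cmp K g x = hzero K X C}"
    using a unfolding weak_kernel_def by blast
  have wc: "\<And>X. X\<in>Ob K \<Longrightarrow> {cmp K y g | y. y \<in> Hom K C X} = {x \<in> Hom K B X. cmp K x f = hzero K A X}"
    using a unfolding weak_cokernel_def by blast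
  have "cmp K f (idm K A) \<in> {cmp K f y | y. y \<in> Hom K A A}" using o by (auto intro!: exI[of _ "idm K A"])
  then show "cmp K g f = hzero K A C" using wk[OF o(1)] o by auto
  show "\<And>X x. X\<in>Ob K \<Longrightarrow> x\<in>Hom K X B \<Longrightarrow> cmp K g x = hzero K X C \<Longrightarrow> \<exists>y\<in>Hom K X A. x = cmp K f y"
  proof -
    fix X x assume "X\<in>Ob K" "x\<in>Hom K X B" "cmp K g x = hzero K X C"
    then have "x \<in> {cmp K f y | y. y \<in> Hom K X A}" using wk by auto
    then show "\<exists>y\<in>Hom K X A. x = cmp K f y" by auto
  qed
  show "\<And>X x. X\<in>Ob K \<Longrightarrow> x\<in>Hom K B X \<Longrightarrow> cmp K x f = hzero K A X \<Longrightarrow> \<exists>y\<in>Hom K C X. x = cmp K y g"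
  proof -
    fix X x assume "X\<in>Ob K" "x\<in>Hom K B X" "cmp K x f = hzero K A X"
    then have "x \<in> {cmp K y g | y. y \<in> Hom K C X}" using wc by auto
    then show "\<exists>y\<in>Hom K C X. x = cmp K y g" by auto
  qed
qed

lemma wkcI: assumes o: "A\<in>Ob K" "B\<in>Ob K" "C\<in>Ob K" "f\<in>Hom K A B" "g\<in>Hom K B C" and gf: "cmp K g f = hzero K A C"
  and k: "\<And>X x. X\<in>Ob K \<Longrightarrow> x\<in>Hom K X B \<Longrightarrow> cmp K g x = hzero K X C \<Longrightarrow> \<exists>y\<in>Hom K X A. x = cmp K f y"
  and c: "\<And>X x. X\<in>Ob K \<Longrightarrow> x\<in>Hom K B X \<Longrightarrow> cmp K x f = hzero K A X \<Longrightarrow> \<exists>y\<in>Hom K C X. x = cmp K y g"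
  shows "weak_kc_pair K (A,f,B,g,C)"
proof -
  have "weak_kernel K A B C f g" unfolding weak_kernel_def
  proof (intro ballI equalityI subsetI)
    fix X x assume X: "X\<in>Ob K" and "x \<in> {cmp K f y | y. y \<in> Hom K X A}"
    then obtain y where y: "y\<in>Hom K X A" "x = cmp K f y" by auto
    have "cmp K g x = cmp K (cmp K g f) y" using assoc[of X A B C y f g] y o X by simp
    then show "x \<in> {x \<in> Hom K X B. cmp K g x = hzero K X C}" using y o X gf cmp_hom[of X A B y f] by simp
  next
    fix X x assume "X\<in>Ob K" "x \<in> {x \<in> Hom K X B. cmp K g x = hzero K X C}"
    then show "x \<in> {cmp K f y | y. y \<in> Hom K X A}" using k by blast
  qed
  moreover have "weak_cokernel K A B C f g" unfolding weak_cokernel_def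
  proof (intro ballI equalityI subsetI)
    fix X x assume X: "X\<in>Ob K" and "x \<in> {cmp K y g | y. y \<in> Hom K C X}"
    then obtain y where y: "y\<in>Hom K C X" "x = cmp K y g" by auto
    have "cmp K x f = cmp K y (cmp K g f)" using assoc[of A B C X f g y] y o X by simp
    then show "x \<in> {x \<in> Hom K B X. cmp K x f = hzero K A X}" using y o X gf cmp_hom[of B C X g y] by simp
  next
    fix X x assume "X\<in>Ob K" "x \<in> {x \<in> Hom K B X. cmp K x f = hzero K A X}"
    then show "x \<in> {cmp K y g | y. y \<in> Hom K C X}" using c by blast
  qed
  ultimately show ?thesis using o unfolding weak_kc_pair_def by simp
qed

lemma iso_id: "X\<in>Ob K \<Longrightarrow> is_iso K X X (idm K X)"
  unfolding is_iso_def by (intro conjI bexI[of _ "idm K X"]) auto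

lemma isoD: assumes "is_iso K X Y f" obtains g where "f\<in>Hom K X Y" "g\<in>Hom K Y X" "cmp K g f = idm K X" "cmp K f g = idm K Y"
  using assms unfolding is_iso_def by blast

lemma iso_comp: assumes o: "X\<in>Ob K" "Y\<in>Ob K" "Z\<in>Ob K" and f: "is_iso K X Y f" and g: "is_iso K Y Z g"
  shows "is_iso K X Z (cmp K g f)"
proof -
  obtain f' where f': "f\<in>Hom K X Y" "f'\<in>Hom K Y X" "cmp K f' f = idm K X" "cmp K f f' = idm K Y" using isoD[OF f] .
  obtain g' where g': "g\<in>Hom K Y Z" "g'\<in>Hom K Z Y" "cmp K g' g = idm K Y" "cmp K g g' = idm K Z" using isoD[OF g] .
  have gf: "cmp K g f \<in> Hom K X Z" using cmp_hom[of X Y Z f g] o f' g' by simp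
  have "cmp K (cmp K f' g') (cmp K g f) = cmp K f' (cmp K g' (cmp K g f))"
    using assoc[of X Z Y X "cmp K g f" g' f'] gf o f' g' by simp
  also have "\<dots> = cmp K f' (cmp K (cmp K g' g) f)" using assoc[of X Y Z Y f g g'] o f' g' by simp
  also have "\<dots> = idm K X" using f' g' o by simp
  finally have 1: "cmp K (cmp K f' g') (cmp K g f) = idm K X" .
  have "cmp K (cmp K g f) (cmp K f' g') = cmp K g (cmp K (cmp K f f') g')"
    using assoc[of Z Y X Y g' f' f] assoc[of Z Y Y Z g' "cmp K f f'" g] assoc[of Z X Y Z "cmp K f' g'" f g]
     cmp_hom[of Z Y X g' f'] cmp_hom[of Y X Y f' f] o f' g' by simp
  also have "\<dots> = idm K Z" using f' g' o by simp
  finally have 2: "cmp K (cmp K g f) (cmp K f' g') = idm K Z" .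
  show ?thesis unfolding is_iso_def using 1 2 cmp_hom[of X Y Z f g] cmp_hom[of Z Y X g' f'] o f' g' by blast
qed

lemma iso_two: assumes o: "X\<in>Ob K" "Y\<in>Ob K" and u: "u\<in>Hom K X Y" and v: "v\<in>Hom K Y X"
  and vu: "is_iso K X X (cmp K v u)" and uv: "is_iso K Y Y (cmp K u v)"
  shows "is_iso K X Y u"
proof -
  obtain m where m: "m\<in>Hom K X X" "cmp K m (cmp K v u) = idm K X" using isoD[OF vu] by metis
  obtain n where n: "n\<in>Hom K Y Y" "cmp K (cmp K u v) n = idm K Y" using isoD[OF uv] by metis
  have L: "cmp K (cmp K m v) u = idm K X" using m assoc[of X Y X X u v m] o u v by simp
  have R: "cmp K u (cmp K v n) = idm K Y" using n assoc[of Y Y X Y n v u] o u v by simp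
  have mv: "cmp K m v \<in> Hom K Y X" using cmp_hom[of Y X X v m] o m v by simp
  have vn: "cmp K v n \<in> Hom K Y X" using cmp_hom[of Y Y X n v] o n v by simp
  have "cmp K m v = cmp K (cmp K m v) (cmp K u (cmp K v n))" using R mv o by simp
  also have "\<dots> = cmp K (cmp K (cmp K m v) u) (cmp K v n)" using assoc[of Y X Y X "cmp K v n" u "cmp K m v"] o mv vn u by simp
  also have "\<dots> = cmp K v n" using L vn o by simp
  finally have "cmp K m v = cmp K v n" .
  then show ?thesis unfolding is_iso_def using L R u vn by metis
qed

lemma chain_comp: assumes c1: "chain_map K (A,f,B,g,C) (A',f',B',g',C') a b c"
  and c2: "chain_map K (A',f',B',g',C') (A'',f'',B'',g'',C'') a' b' c'"
  shows "chain_map K (A,f,B,g,C) (A'',f'',B'',g'',C'') (cmp K a' a) (cmp K b' b) (cmp K c' c)"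
proof -
  note h1 = c1[unfolded chain_map_def, simplified] and h2 = c2[unfolded chain_map_def, simplified]
  have "cmp K (cmp K b' b) f = cmp K b' (cmp K f' a)" using h1 h2 assoc[of A B B' B'' f b b'] by simp
  also have "\<dots> = cmp K (cmp K f'' a') a" using h1 h2 assoc[of A A' B' B'' a f' b'] assoc[of A A' A'' B'' a a' f''] by simp
  also have "\<dots> = cmp K f'' (cmp K a' a)" using h1 h2 assoc[of A A' A'' B'' a a' f''] by simp
  finally have 1: "cmp K (cmp K b' b) f = cmp K f'' (cmp K a' a)" .
  have "cmp K (cmp K c' c) g = cmp K c' (cmp K g' b)" using h1 h2 assoc[of B C C' C'' g c c'] by simp
  also have "\<dots> = cmp K (cmp K g'' b') b" using h1 h2 assoc[of B B' C' C'' b g' c'] assoc[of B B' B'' C'' b b' g''] by simp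
  also have "\<dots> = cmp K g'' (cmp K b' b)" using h1 h2 assoc[of B B' B'' C'' b b' g''] by simp
  finally have 2: "cmp K (cmp K c' c) g = cmp K g'' (cmp K b' b)" .
  show ?thesis unfolding chain_map_def using h1 h2 1 2 cmp_hom by (simp, metis)
qed

lemma nil_iso: assumes w: "weak_kc_pair K (A,f,B,g,C)" and p: "p\<in>Hom K B B"
  and pf: "cmp K p f = f" and gp: "cmp K g p = g"
  shows "is_iso K B B p"
proof -
  note W = wkcD[OF w]
  have oB: "B\<in>Ob K" using W by simp
  have i: "idm K B \<in> Hom K B B" using oB by simp
  have mi: "hneg K B B (idm K B) \<in> Hom K B B" using neg_hom[OF oB oB i] .
  define n where "n = hadd K B B p (hneg K B B (idm K B))"
  have n: "n\<in>Hom K B B" unfolding n_def using add_hom[OF oB oB p mi] .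
  have "cmp K g n = hadd K B (C) (cmp K g p) (cmp K g (hneg K B B (idm K B)))"
    unfolding n_def using distl[of B B C p "hneg K B B (idm K B)" g] W p mi by simp
  also have "\<dots> = hzero K B C" using gp cmp_negr[of B B C "idm K B" g] W by simp
  finally have gn: "cmp K g n = hzero K B C" .
  obtain h where h: "h\<in>Hom K B A" "n = cmp K f h" using W(7)[OF oB n gn] by blast
  have "cmp K n f = hadd K A B (cmp K p f) (cmp K (hneg K B B (idm K B)) f)"
    unfolding n_def using distr[of A B B f p "hneg K B B (idm K B)"] W p mi by simp
  also have "\<dots> = hzero K A B" using pf cmp_negl[of A B B f "idm K B"] W by simp
  finally have nf: "cmp K n f = hzero K A B" .
  obtain k where k: "k\<in>Hom K C B" "n = cmp K k g" using W(8)[OF oB n nf] by blast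
  have "cmp K n n = cmp K k (cmp K g (cmp K f h))" using k h assoc[of B A B B h f n] assoc[of B B C B "cmp K f h" g k] W cmp_hom[of B A B h f] by simp
  also have "\<dots> = cmp K k (hzero K B C)" using gn h by simp
  also have "\<dots> = hzero K B B" using W k by simp
  finally have nn: "cmp K n n = hzero K B B" .
  have "hadd K B B (idm K B) n = hadd K B B n (idm K B)" using add_comm i n oB by blast
  also have "\<dots> = p" unfolding n_def using add_assoc[OF oB oB p mi i] p oB by simp
  finally have pe: "p = hadd K B B (idm K B) n" by simp
  have mn: "hneg K B B n \<in> Hom K B B" using neg_hom[OF oB oB n] .
  define q where "q = hadd K B B (idm K B) (hneg K B B n)"
  have q: "q\<in>Hom K B B" unfolding q_def using add_hom[OF oB oB i mn] .
  have pn: "cmp K p n = n" unfolding pe using distr[of B B B n "idm K B" n] i n oB nn by simp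
  have np: "cmp K n p = n" unfolding pe using distl[of B B B "idm K B" n n] i n oB nn by simp
  have "cmp K p q = hadd K B B p (hneg K B B n)"
    unfolding q_def using distl[of B B B "idm K B" "hneg K B B n" p] cmp_negr[of B B B n p] p i mn n oB pn by simp
  also have "\<dots> = idm K B" unfolding pe using add_assoc[OF oB oB i n mn] i n oB by simp
  finally have 1: "cmp K p q = idm K B" .
  have "cmp K q p = hadd K B B p (hneg K B B n)"
    unfolding q_def using distr[of B B B p "idm K B" "hneg K B B n"] cmp_negl[of B B B p n] p i mn n oB np by simp
  also have "\<dots> = idm K B" unfolding pe using add_assoc[OF oB oB i n mn] i n oB by simp
  finally have 2: "cmp K q p = idm K B" .
  show ?thesis unfolding is_iso_def using 1 2 p q by blast
qed

lemma wkc_transport: assumes w: "weak_kc_pair K (A,f,B,g,C)"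
  and c1: "chain_map K (A,f,B,g,C) (A',f',B',g',C') a b c"
  and c2: "chain_map K (A',f',B',g',C') (A,f,B,g,C) a' b' c'"
  and bb: "cmp K b b' = idm K B'"
  shows "weak_kc_pair K (A',f',B',g',C')"
proof -
  note W = wkcD[OF w]
  note h1 = c1[unfolded chain_map_def, simplified] and h2 = c2[unfolded chain_map_def, simplified]
  have e1: "\<And>X x. X\<in>Ob K \<Longrightarrow> x \<in> Hom K X B' \<Longrightarrow> x = cmp K b (cmp K b' x)"
  proof -
    fix X x assume X: "X\<in>Ob K" and x: "x \<in> Hom K X B'"
    have "cmp K b (cmp K b' x) = cmp K (cmp K b b') x" using assoc[of X B' B B' x b' b] h1 h2 X x by simp
    then show "x = cmp K b (cmp K b' x)" using bb h1 X x by simp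
  qed
  have e2: "\<And>X x. X\<in>Ob K \<Longrightarrow> x \<in> Hom K B' X \<Longrightarrow> x = cmp K (cmp K x b) b'"
  proof -
    fix X x assume X: "X\<in>Ob K" and x: "x \<in> Hom K B' X"
    have "cmp K (cmp K x b) b' = cmp K x (cmp K b b')" using assoc[of B' B B' X b' b x] h1 h2 X x by simp
    then show "x = cmp K (cmp K x b) b'" using bb h1 X x by simp
  qed
  show ?thesis
  proof (rule wkcI)
    show o: "A' \<in> Ob K" "B' \<in> Ob K" "C' \<in> Ob K" "f' \<in> Hom K A' B'" "g' \<in> Hom K B' C'" using h1 by auto
    have "cmp K g' f' = cmp K g' (cmp K b (cmp K b' f'))" using e1[of A' f'] o by simp
    also have "\<dots> = cmp K (cmp K g' b) (cmp K b' f')" using assoc[of A' B B' C' "cmp K b' f'" b g'] h1 h2 cmp_hom[of A' B' B f' b'] by simp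
    also have "\<dots> = cmp K (cmp K c g) (cmp K f a')" using h1 h2 by simp
    also have "\<dots> = cmp K c (cmp K (cmp K g f) a')"
      using assoc[of A' B C C' "cmp K f a'" g c] assoc[of A' A B C a' f g] h1 h2 cmp_hom[of A' A B a' f] by simp
    also have "\<dots> = hzero K A' C'" using W h1 h2 by auto
    finally show "cmp K g' f' = hzero K A' C'" .
  next
    fix X x assume X: "X\<in>Ob K" and x: "x\<in>Hom K X B'" and gx: "cmp K g' x = hzero K X C'"
    have bx: "cmp K b' x \<in> Hom K X B" using cmp_hom[of X B' B x b'] X x h2 by simp
    have "cmp K g (cmp K b' x) = cmp K c' (cmp K g' x)"
      using assoc[of X B' B C x b' g] assoc[of X B' C' C x g' c'] h2 X x by simp
    also have "\<dots> = hzero K X C" using gx h2 X by simp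
    finally obtain y where y: "y\<in>Hom K X A" "cmp K b' x = cmp K f y" using W(7)[OF X bx] by blast
    have "x = cmp K b (cmp K f y)" using e1[OF X x] y by simp
    also have "\<dots> = cmp K f' (cmp K a y)" using assoc[of X A B B' y f b] assoc[of X A A' B' y a f'] h1 y X by simp
    finally show "\<exists>y\<in>Hom K X A'. x = cmp K f' y" using cmp_hom[of X A A' y a] h1 y X by blast
  next
    fix X x assume X: "X\<in>Ob K" and x: "x\<in>Hom K B' X" and xf: "cmp K x f' = hzero K A' X"
    have xb: "cmp K x b \<in> Hom K B X" using cmp_hom[of B B' X b x] X x h1 by simp
    have "cmp K (cmp K x b) f = cmp K (cmp K x f') a"
      using assoc[of A B B' X f b x] assoc[of A A' B' X a f' x] h1 X x by simp
    also have "\<dots> = hzero K A X" using xf h1 X by simp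
    finally obtain z where z: "z\<in>Hom K C X" "cmp K x b = cmp K z g" using W(8)[OF X xb] by blast
    have "x = cmp K (cmp K z g) b'" using e2[OF X x] z by simp
    also have "\<dots> = cmp K (cmp K z c') g'" using assoc[of B' B C X b' g z] assoc[of B' C' C X g' c' z] h2 z X by simp
    finally show "\<exists>y\<in>Hom K C' X. x = cmp K y g'" using cmp_hom[of C' C X c' z] h2 z X by blast
  qed
qed

lemma diag: assumes b1: "biproduct K X1 X2 S1 i1 i2 p1 p2" and b2: "biproduct K Y1 Y2 S2 j1 j2 q1 q2"
  and o: "X1\<in>Ob K" "X2\<in>Ob K" "Y1\<in>Ob K" "Y2\<in>Ob K"
  and h: "h1\<in>Hom K X1 Y1" "h2\<in>Hom K X2 Y2"
  and M: "M = hadd K S1 S2 (cmp K j1 (cmp K h1 p1)) (cmp K j2 (cmp K h2 p2))"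
  shows "M \<in> Hom K S1 S2" "cmp K M i1 = cmp K j1 h1" "cmp K M i2 = cmp K j2 h2"
    "cmp K q1 M = cmp K h1 p1" "cmp K q2 M = cmp K h2 p2"
proof -
  note B1 = bpD[OF b1] and B2 = bpD[OF b2]
  have M': "M = hadd K S1 S2 (cmp K (cmp K j1 h1) p1) (cmp K (cmp K j2 h2) p2)"
    unfolding M using assoc[of S1 X1 Y1 S2 p1 h1 j1] assoc[of S1 X2 Y2 S2 p2 h2 j2] B1 B2 h o by simp
  have a1: "cmp K j1 h1 \<in> Hom K X1 S2" using cmp_hom[of X1 Y1 S2 h1 j1] B2 h o by simp
  have a2: "cmp K j2 h2 \<in> Hom K X2 S2" using cmp_hom[of X2 Y2 S2 h2 j2] B2 h o by simp
  note cp = copair[OF b1 o(1,2) B2(1) a1 a2, folded M']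
  show "M \<in> Hom K S1 S2" "cmp K M i1 = cmp K j1 h1" "cmp K M i2 = cmp K j2 h2" using cp by auto
  have c1: "cmp K h1 p1 \<in> Hom K S1 Y1" using cmp_hom[of S1 X1 Y1 p1 h1] B1 h o by simp
  have c2: "cmp K h2 p2 \<in> Hom K S1 Y2" using cmp_hom[of S1 X2 Y2 p2 h2] B1 h o by simp
  note pp = pair[OF b2 o(3,4) B1(1) c1 c2, folded M]
  show "cmp K q1 M = cmp K h1 p1" "cmp K q2 M = cmp K h2 p2" using pp by auto
qed

lemma wkc_sum: assumes w1: "weak_kc_pair K (A,f,B,g,C)" and w2: "weak_kc_pair K (A',f',B',g',C')"
  and bA: "biproduct K A A' SA ia1 ia2 qa1 qa2" and bB: "biproduct K B B' SB ib1 ib2 qb1 qb2"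
  and bC: "biproduct K C C' SC ic1 ic2 qc1 qc2"
  and F: "F = hadd K SA SB (cmp K ib1 (cmp K f qa1)) (cmp K ib2 (cmp K f' qa2))"
  and G: "G = hadd K SB SC (cmp K ic1 (cmp K g qb1)) (cmp K ic2 (cmp K g' qb2))"
  shows "weak_kc_pair K (SA,F,SB,G,SC)"
proof -
  note W1 = wkcD[OF w1] and W2 = wkcD[OF w2]
  note BA = bpD[OF bA] and BB = bpD[OF bB] and BC = bpD[OF bC]
  note dF = diag[OF bA bB W1(1) W2(1) W1(2) W2(2) W1(4) W2(4) F]
  note dG = diag[OF bB bC W1(2) W2(2) W1(3) W2(3) W1(5) W2(5) G]
  have o: "SA \<in> Ob K" "SB \<in> Ob K" "SC \<in> Ob K" "F \<in> Hom K SA SB" "G \<in> Hom K SB SC"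
      using BA BB BC dF dG by auto
  show ?thesis
  proof (rule wkcI)
    show "SA \<in> Ob K" "SB \<in> Ob K" "SC \<in> Ob K" "F \<in> Hom K SA SB" "G \<in> Hom K SB SC" using o by auto
    have GF: "cmp K G F \<in> Hom K SA SC" using cmp_hom[of SA SB SC F G] o by simp
    show "cmp K G F = hzero K SA SC"
    proof (rule bp_outext[OF bA W1(1) W2(1) o(3) GF])
      show "hzero K SA SC \<in> Hom K SA SC" using o by simp
      have "cmp K (cmp K G F) ia1 = cmp K G (cmp K ib1 f)" using assoc[of A SA SB SC ia1 F G] dF BA o W1 W2 by simp
      also have "\<dots> = cmp K (cmp K ic1 g) f" using assoc[of A B SB SC f ib1 G] dG BB o W1 W2 by simp
      also have "\<dots> = hzero K A SC" using assoc[of A B C SC f g ic1] BC W1 W2 by simp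
      finally show "cmp K (cmp K G F) ia1 = cmp K (hzero K SA SC) ia1" using BA o W1 by simp
      have "cmp K (cmp K G F) ia2 = cmp K G (cmp K ib2 f')" using assoc[of A' SA SB SC ia2 F G] dF BA o W1 W2 by simp
      also have "\<dots> = cmp K (cmp K ic2 g') f'" using assoc[of A' B' SB SC f' ib2 G] dG BB o W1 W2 by simp
      also have "\<dots> = hzero K A' SC" using assoc[of A' B' C' SC f' g' ic2] BC W1 W2 by simp
      finally show "cmp K (cmp K G F) ia2 = cmp K (hzero K SA SC) ia2" using BA o W2 by simp
    qed
  next
    fix X x assume X: "X\<in>Ob K" and x: "x\<in>Hom K X SB" and gx: "cmp K G x = hzero K X SC"
    have x1: "cmp K qb1 x \<in> Hom K X B" using cmp_hom[of X SB B x qb1] BB X x W1 by simp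
    have x2: "cmp K qb2 x \<in> Hom K X B'" using cmp_hom[of X SB B' x qb2] BB X x W2 by simp
    have "cmp K g (cmp K qb1 x) = cmp K (cmp K qc1 G) x" using assoc[of X SB B C x qb1 g] dG BB X x W1 by simp
    also have "\<dots> = hzero K X C" using assoc[of X SB SC C x G qc1] gx dG BB BC X x W1 by simp
    finally obtain y1 where y1: "y1\<in>Hom K X A" "cmp K qb1 x = cmp K f y1" using W1(7)[OF X x1] by blast
    have "cmp K g' (cmp K qb2 x) = cmp K (cmp K qc2 G) x" using assoc[of X SB B' C' x qb2 g'] dG BB X x W2 by simp
    also have "\<dots> = hzero K X C'" using assoc[of X SB SC C' x G qc2] gx dG BB BC X x W2 by simp
    finally obtain y2 where y2: "y2\<in>Hom K X A'" "cmp K qb2 x = cmp K f' y2" using W2(7)[OF X x2] by blast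
    note py = pair[OF bA W1(1) W2(1) X y1(1) y2(1)]
    define y where "y = hadd K X SA (cmp K ia1 y1) (cmp K ia2 y2)"
    have Fy: "cmp K F y \<in> Hom K X SB" using cmp_hom[of X SA SB y F] py o X unfolding y_def by simp
    have "cmp K F y = x"
    proof (rule bp_inext[OF bB W1(2) W2(2) X Fy x])
      show "cmp K qb1 (cmp K F y) = cmp K qb1 x"
        using assoc[of X SA SB B y F qb1] assoc[of X SA A B y qa1 f] dF py y1 BA BB o X W1 unfolding y_def by simp
      show "cmp K qb2 (cmp K F y) = cmp K qb2 x"
        using assoc[of X SA SB B' y F qb2] assoc[of X SA A' B' y qa2 f'] dF py y2 BA BB o X W2 unfolding y_def by simp
    qed
    then show "\<exists>y\<in>Hom K X SA. x = cmp K F y" using py unfolding y_def by metis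
  next
    fix X x assume X: "X\<in>Ob K" and x: "x\<in>Hom K SB X" and xf: "cmp K x F = hzero K SA X"
    have x1: "cmp K x ib1 \<in> Hom K B X" using cmp_hom[of B SB X ib1 x] BB X x W1 by simp
    have x2: "cmp K x ib2 \<in> Hom K B' X" using cmp_hom[of B' SB X ib2 x] BB X x W2 by simp
    have "cmp K (cmp K x ib1) f = cmp K (cmp K x F) ia1" using assoc[of A B SB X f ib1 x] assoc[of A SA SB X ia1 F x] dF BB BA X x W1 by simp
    also have "\<dots> = hzero K A X" using xf BA X W1 by simp
    finally obtain z1 where z1: "z1\<in>Hom K C X" "cmp K x ib1 = cmp K z1 g" using W1(8)[OF X x1] by blast
    have "cmp K (cmp K x ib2) f' = cmp K (cmp K x F) ia2" using assoc[of A' B' SB X f' ib2 x] assoc[of A' SA SB X ia2 F x] dF BB BA X x W2 by simp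
    also have "\<dots> = hzero K A' X" using xf BA X W2 by simp
    finally obtain z2 where z2: "z2\<in>Hom K C' X" "cmp K x ib2 = cmp K z2 g'" using W2(8)[OF X x2] by blast
    note pz = copair[OF bC W1(3) W2(3) X z1(1) z2(1)]
    define z where "z = hadd K SC X (cmp K z1 qc1) (cmp K z2 qc2)"
    have zG: "cmp K z G \<in> Hom K SB X" using cmp_hom[of SB SC X G z] pz o X unfolding z_def by simp
    have "cmp K z G = x"
    proof (rule bp_outext[OF bB W1(2) W2(2) X zG x])
      show "cmp K (cmp K z G) ib1 = cmp K x ib1"
        using assoc[of B SB SC X ib1 G z] assoc[of B C SC X g ic1 z] dG pz z1 BC BB o X W1 unfolding z_def by simp
      show "cmp K (cmp K z G) ib2 = cmp K x ib2"
        using assoc[of B' SB SC X ib2 G z] assoc[of B' C' SC X g' ic2 z] dG pz z2 BC BB o X W2 unfolding z_def by simp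
    qed
    then show "\<exists>y\<in>Hom K SC X. x = cmp K y G" using pz unfolding z_def by metis
  qed
qed

lemma chainD: assumes "chain_map K (A,f,B,g,C) (A',f',B',g',C') a b c"
  shows "A\<in>Ob K" "B\<in>Ob K" "C\<in>Ob K" "A'\<in>Ob K" "B'\<in>Ob K" "C'\<in>Ob K"
    "f\<in>Hom K A B" "g\<in>Hom K B C" "f'\<in>Hom K A' B'" "g'\<in>Hom K B' C'"
    "a\<in>Hom K A A'" "b\<in>Hom K B B'" "c\<in>Hom K C C'" "cmp K b f = cmp K f' a" "cmp K c g = cmp K g' b"
  using assms unfolding chain_map_def by auto

end


locale wet =
  fixes K :: "('o,'m) precat" and E :: "('o,'m,'e) bifun" and s :: "('o,'m,'e) realiz"
  assumes we: "weakly_extriangulated K E s"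
begin

lemma addc: "additive_category K" using we unfolding weakly_extriangulated_def by blast
lemma bif: "additive_bifunctor K E" using we unfolding weakly_extriangulated_def by blast
lemma exr: "exact_realization K E s" using we unfolding weakly_extriangulated_def by blast
lemma rea: "realization K E s" using exr unfolding exact_realization_def by blast
lemma ea2: "EA2 K E s" using we unfolding weakly_extriangulated_def by blast
lemma ea2op: "EA2op K E s" using we unfolding weakly_extriangulated_def by blast

sublocale padd K using addc unfolding additive_category_def by unfold_locales blast

lemmas bd = bif[unfolded additive_bifunctor_def]
lemma egrp: "C\<in>Ob K \<Longrightarrow> A\<in>Ob K \<Longrightarrow> comm_group (ext_grp E C A)"
  using bd[THEN conjunct1] by blast

lemma Ezero_car: "C\<in>Ob K \<Longrightarrow> A\<in>Ob K \<Longrightarrow> Ezero E C A \<in> Ecar E C A"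
  using comm_group.axioms(2)[OF egrp, THEN group.is_monoid, THEN monoid.one_closed, of C A] by (simp add: ext_grp_def)

lemma Eadd_0r: "C\<in>Ob K \<Longrightarrow> A\<in>Ob K \<Longrightarrow> x \<in> Ecar E C A \<Longrightarrow> Eadd E C A x (Ezero E C A) = x"
  using comm_group.axioms(2)[OF egrp, THEN group.is_monoid, THEN monoid.r_one, of C A] by (simp add: ext_grp_def)
lemma Eadd_0l: "C\<in>Ob K \<Longrightarrow> A\<in>Ob K \<Longrightarrow> x \<in> Ecar E C A \<Longrightarrow> Eadd E C A (Ezero E C A) x = x"
  using comm_group.axioms(2)[OF egrp, THEN group.is_monoid, THEN monoid.l_one, of C A] by (simp add: ext_grp_def)
lemma Eadd_car: "C\<in>Ob K \<Longrightarrow> A\<in>Ob K \<Longrightarrow> x \<in> Ecar E C A \<Longrightarrow> y \<in> Ecar E C A \<Longrightarrow> Eadd E C A x y \<in> Ecar E C A"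
  using comm_group.axioms(2)[OF egrp, THEN group.is_monoid, THEN monoid.m_closed, of C A] by (simp add: ext_grp_def)
lemma Eidem: "C\<in>Ob K \<Longrightarrow> A\<in>Ob K \<Longrightarrow> x \<in> Ecar E C A \<Longrightarrow> Eadd E C A x x = x \<Longrightarrow> x = Ezero E C A"
  using comm_group.axioms(2)[OF egrp, THEN group.l_cancel_one, of C A x x] by (simp add: ext_grp_def)

lemma Emap_car: "\<lbrakk>C\<in>Ob K; A\<in>Ob K; C'\<in>Ob K; A'\<in>Ob K; c\<in>Hom K C' C; a\<in>Hom K A A'; d\<in>Ecar E C A\<rbrakk>
  \<Longrightarrow> Emap E C A C' A' c a d \<in> Ecar E C' A'"
  using bd[THEN conjunct2, THEN conjunct1] by blast
lemma Emap_add: "\<lbrakk>C\<in>Ob K; A\<in>Ob K; C'\<in>Ob K; A'\<in>Ob K; c\<in>Hom K C' C; a\<in>Hom K A A'; d\<in>Ecar E C A; d'\<in>Ecar E C A\<rbrakk>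
  \<Longrightarrow> Emap E C A C' A' c a (Eadd E C A d d') = Eadd E C' A' (Emap E C A C' A' c a d) (Emap E C A C' A' c a d')"
  using bd[THEN conjunct2, THEN conjunct1] by blast
lemma Emap_id: "\<lbrakk>C\<in>Ob K; A\<in>Ob K; d\<in>Ecar E C A\<rbrakk> \<Longrightarrow> Emap E C A C A (idm K C) (idm K A) d = d"
  using bd[THEN conjunct2, THEN conjunct2, THEN conjunct1] by blast
lemma Emap_comp: "\<lbrakk>C\<in>Ob K; A\<in>Ob K; C'\<in>Ob K; A'\<in>Ob K; C''\<in>Ob K; A''\<in>Ob K;
   c\<in>Hom K C' C; a\<in>Hom K A A'; c'\<in>Hom K C'' C'; a'\<in>Hom K A' A''; d\<in>Ecar E C A\<rbrakk> \<Longrightarrow>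
   Emap E C' A' C'' A'' c' a' (Emap E C A C' A' c a d) = Emap E C A C'' A'' (cmp K c c') (cmp K a' a) d"
  using bd[THEN conjunct2, THEN conjunct2, THEN conjunct2, THEN conjunct1] by blast
lemma Emap_addc: "\<lbrakk>C\<in>Ob K; A\<in>Ob K; C'\<in>Ob K; c1\<in>Hom K C' C; c2\<in>Hom K C' C; d\<in>Ecar E C A\<rbrakk> \<Longrightarrow>
   Emap E C A C' A (hadd K C' C c1 c2) (idm K A) d = Eadd E C' A (Emap E C A C' A c1 (idm K A) d) (Emap E C A C' A c2 (idm K A) d)"
  using bd[THEN conjunct2, THEN conjunct2, THEN conjunct2, THEN conjunct2, THEN conjunct1] by blast
lemma Emap_adda: "\<lbrakk>C\<in>Ob K; A\<in>Ob K; A'\<in>Ob K; a1\<in>Hom K A A'; a2\<in>Hom K A A'; d\<in>Ecar E C A\<rbrakk> \<Longrightarrow>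
   Emap E C A C A' (idm K C) (hadd K A A' a1 a2) d = Eadd E C A' (Emap E C A C A' (idm K C) a1 d) (Emap E C A C A' (idm K C) a2 d)"
  using bd[THEN conjunct2, THEN conjunct2, THEN conjunct2, THEN conjunct2, THEN conjunct2] by blast

lemma Emap_zero_elem: assumes o: "C\<in>Ob K" "A\<in>Ob K" "C'\<in>Ob K" "A'\<in>Ob K" and h: "c\<in>Hom K C' C" "a\<in>Hom K A A'"
  shows "Emap E C A C' A' c a (Ezero E C A) = Ezero E C' A'"
proof -
  have z: "Ezero E C A \<in> Ecar E C A" using Ezero_car o by simp
  show ?thesis
    apply (rule Eidem)
    using Emap_add[OF o h z z] Eadd_0r[OF o(1,2) z] Emap_car[OF o h z] o by auto
qed

lemma Emap_zero_c: assumes o: "C\<in>Ob K" "A\<in>Ob K" "C'\<in>Ob K" "A'\<in>Ob K" and h: "a\<in>Hom K A A'" and d: "d\<in>Ecar E C A"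
  shows "Emap E C A C' A' (hzero K C' C) a d = Ezero E C' A'"
proof -
  have z: "hzero K C' C \<in> Hom K C' C" using o by simp
  have 1: "Emap E C A C' A (hzero K C' C) (idm K A) d = Ezero E C' A"
    apply (rule Eidem)
    using Emap_addc[OF o(1,2,3) z z d] Emap_car[OF o(1,2,3,2) z _ d] o by auto
  have "Emap E C A C' A' (hzero K C' C) a d = Emap E C' A C' A' (idm K C') a (Emap E C A C' A (hzero K C' C) (idm K A) d)"
    using Emap_comp[OF o(1,2,3,2,3,4) z _ _ h d] o h by simp
  also have "\<dots> = Ezero E C' A'" unfolding 1 using Emap_zero_elem[OF o(3,2,3,4) _ h] o by simp
  finally show ?thesis .
qed

lemma Emap_zero_a: assumes o: "C\<in>Ob K" "A\<in>Ob K" "C'\<in>Ob K" "A'\<in>Ob K" and h: "c\<in>Hom K C' C" and d: "d\<in>Ecar E C A"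
  shows "Emap E C A C' A' c (hzero K A A') d = Ezero E C' A'"
proof -
  have z: "hzero K A A' \<in> Hom K A A'" using o by simp
  have 1: "Emap E C A C A' (idm K C) (hzero K A A') d = Ezero E C A'"
    apply (rule Eidem)
    using Emap_adda[OF o(1,2,4) z z d] Emap_car[OF o(1,2,1,4) _ z d] o by auto
  have "Emap E C A C' A' c (hzero K A A') d = Emap E C A' C' A' c (idm K A') (Emap E C A C A' (idm K C) (hzero K A A') d)"
    using Emap_comp[OF o(1,2,1,4,3,4) _ z h _ d] o h by simp
  also have "\<dots> = Ezero E C' A'" unfolding 1 using Emap_zero_elem[OF o(1,4,3,4) h] o by simp
  finally show ?thesis .
qed

lemmas rd = rea[unfolded realization_def]

lemma rep: assumes o: "C\<in>Ob K" "A\<in>Ob K" and d: "d\<in>Ecar E C A"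
  obtains f B g where "weak_kc_pair K (A,f,B,g,C)" "(A,f,B,g,C) \<in> s C A d"
    "s C A d = {S'. weak_kc_pair K S' \<and> seq_equiv K (A,f,B,g,C) S'}"
proof -
  obtain f B g where w: "weak_kc_pair K (A,f,B,g,C)" and eq: "s C A d = {S'. weak_kc_pair K S' \<and> seq_equiv K (A,f,B,g,C) S'}"
    using rd[THEN conjunct1] o d by blast
  note W = wkcD[OF w]
  have "seq_equiv K (A,f,B,g,C) (A,f,B,g,C)"
    unfolding seq_equiv_def chain_map_def using W iso_id[of B] by (auto intro!: exI[of _ "idm K B"])
  then show ?thesis using that w eq by blast
qed

lemma memD: assumes o: "C\<in>Ob K" "A\<in>Ob K" and d: "d\<in>Ecar E C A" and m: "(A',f,B,g,C') \<in> s C A d"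
  shows "A' = A" "C' = C" "weak_kc_pair K (A',f,B,g,C')"
proof -
  obtain f0 B0 g0 where eq: "s C A d = {S'. weak_kc_pair K S' \<and> seq_equiv K (A,f0,B0,g0,C) S'}"
    using rep[OF o d] by metis
  from m[unfolded eq] show "A' = A" "C' = C" "weak_kc_pair K (A',f,B,g,C')" unfolding seq_equiv_def by auto
qed

lemma R0: assumes o: "C\<in>Ob K" "A\<in>Ob K" "C'\<in>Ob K" "A'\<in>Ob K" and d: "d\<in>Ecar E C A" and r: "r\<in>Ecar E C' A'"
  and h: "a\<in>Hom K A A'" "c\<in>Hom K C C'" and eq: "pushE K E C A A' a d = pullE K E C' C A' c r"
  and S: "S \<in> s C A d" and S': "S' \<in> s C' A' r"
  shows "\<exists>b. chain_map K S S' a b c"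
  using rd[THEN conjunct2] o d r h eq S S' by blast

lemma class_mem: assumes o: "C\<in>Ob K" "A\<in>Ob K" and d: "d\<in>Ecar E C A"
  and T: "(A,fT,BT,gT,C) \<in> s C A d" and w: "weak_kc_pair K (A,f',B',g',C)"
  and cu: "chain_map K (A,fT,BT,gT,C) (A,f',B',g',C) (idm K A) u (idm K C)"
  and cv: "chain_map K (A,f',B',g',C) (A,fT,BT,gT,C) (idm K A) v (idm K C)"
  shows "(A,f',B',g',C) \<in> s C A d"
proof -
  obtain f0 B0 g0 where eq: "s C A d = {S'. weak_kc_pair K S' \<and> seq_equiv K (A,f0,B0,g0,C) S'}"
    using rep[OF o d] by metis
  have wT: "weak_kc_pair K (A,fT,BT,gT,C)" using memD[OF o d T] by simp
  from T[unfolded eq] obtain e where e: "is_iso K B0 BT e" "chain_map K (A,f0,B0,g0,C) (A,fT,BT,gT,C) (idm K A) e (idm K C)"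
    unfolding seq_equiv_def by auto
  note hu = cu[unfolded chain_map_def, simplified] and hv = cv[unfolded chain_map_def, simplified]
  have vu: "chain_map K (A,fT,BT,gT,C) (A,fT,BT,gT,C) (idm K A) (cmp K v u) (idm K C)"
    using chain_comp[OF cu cv] o by simp
  have uv: "chain_map K (A,f',B',g',C) (A,f',B',g',C) (idm K A) (cmp K u v) (idm K C)"
    using chain_comp[OF cv cu] o by simp
  have i1: "is_iso K BT BT (cmp K v u)"
    using vu[unfolded chain_map_def] wkcD[OF wT] by (intro nil_iso[OF wT]) auto
  have i2: "is_iso K B' B' (cmp K u v)"
    using uv[unfolded chain_map_def] wkcD[OF w] by (intro nil_iso[OF w]) auto
  have iu: "is_iso K BT B' u" using iso_two[OF _ _ _ _ i1 i2] hu hv by simp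
  have ob: "B0 \<in> Ob K" using e(2)[unfolded chain_map_def] by simp
  have "is_iso K B0 B' (cmp K u e)" using iso_comp[OF ob _ _ e(1) iu] hu by simp
  moreover have "chain_map K (A,f0,B0,g0,C) (A,f',B',g',C) (idm K A) (cmp K u e) (idm K C)"
    using chain_comp[OF e(2) cu] o by simp
  ultimately have "seq_equiv K (A,f0,B0,g0,C) (A,f',B',g',C)" unfolding seq_equiv_def by auto
  then show ?thesis unfolding eq using w by simp
qed

lemma confD: assumes "(A,f,B,g,C) \<in> conflations K E s"
  obtains d where "C\<in>Ob K" "A\<in>Ob K" "d\<in>Ecar E C A" "(A,f,B,g,C) \<in> s C A d" "weak_kc_pair K (A,f,B,g,C)"
proof -
  from assms obtain C0 A0 d where o: "C0\<in>Ob K" "A0\<in>Ob K" and d: "d\<in>Ecar E C0 A0" and m: "(A,f,B,g,C) \<in> s C0 A0 d"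
    unfolding conflations_def by blast
  note M = memD[OF o d m]
  show ?thesis using that o d m M by simp
qed

lemma confI: "C\<in>Ob K \<Longrightarrow> A\<in>Ob K \<Longrightarrow> d\<in>Ecar E C A \<Longrightarrow> S \<in> s C A d \<Longrightarrow> S \<in> conflations K E s"
  unfolding conflations_def by blast

lemma iso_closed: assumes m: "(A,f,B,g,C) \<in> conflations K E s"
  and si: "seq_iso K (A,f,B,g,C) (A',f',B',g',C')"
  shows "(A',f',B',g',C') \<in> conflations K E s"
proof -
  obtain d where o: "C\<in>Ob K" "A\<in>Ob K" and d: "d\<in>Ecar E C A" and mS: "(A,f,B,g,C) \<in> s C A d"
    and w: "weak_kc_pair K (A,f,B,g,C)" using confD[OF m] by metis
  from si obtain a b c where ch: "chain_map K (A,f,B,g,C) (A',f',B',g',C') a b c"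
    and ia: "is_iso K A A' a" and ib: "is_iso K B B' b" and ic: "is_iso K C C' c"
    unfolding seq_iso_def by auto
  note h = chainD[OF ch]
  obtain a' where a': "a'\<in>Hom K A' A" "cmp K a' a = idm K A" "cmp K a a' = idm K A'" using isoD[OF ia] by metis
  obtain b' where b': "b'\<in>Hom K B' B" "cmp K b' b = idm K B" "cmp K b b' = idm K B'" using isoD[OF ib] by metis
  obtain c' where c': "c'\<in>Hom K C' C" "cmp K c' c = idm K C" "cmp K c c' = idm K C'" using isoD[OF ic] by metis
  have "cmp K b' f' = cmp K b' (cmp K f' (cmp K a a'))" using a' h by simp
  also have "\<dots> = cmp K b' (cmp K (cmp K b f) a')" using assoc[of A' A A' B' a' a f'] a' h by simp
  also have "\<dots> = cmp K f a'" using assoc[of A' A B B' a' f b] assoc[of A' B B' B "cmp K f a'" b b'] cmp_hom[of A' A B a' f] a' b' h by simp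
  finally have e1: "cmp K b' f' = cmp K f a'" .
  have "cmp K c' g' = cmp K c' (cmp K g' (cmp K b b'))" using b' h by simp
  also have "\<dots> = cmp K c' (cmp K (cmp K c g) b')" using assoc[of B' B B' C' b' b g'] b' h by simp
  also have "\<dots> = cmp K g b'" using assoc[of B' B C C' b' g c] assoc[of B' C C' C "cmp K g b'" c c'] cmp_hom[of B' B C b' g] b' c' h by simp
  finally have e2: "cmp K c' g' = cmp K g b'" .
  have chi: "chain_map K (A',f',B',g',C') (A,f,B,g,C) a' b' c'"
    unfolding chain_map_def using h a' b' c' e1 e2 by simp
  have w': "weak_kc_pair K (A',f',B',g',C')" using wkc_transport[OF w ch chi b'(3)] .
  define d' where "d' = Emap E C A C' A' c' a d"
  have d': "d' \<in> Ecar E C' A'" unfolding d'_def using Emap_car[of C A C' A' c' a d] h c' d by simp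
  obtain fT BT gT where T: "(A',fT,BT,gT,C') \<in> s C' A' d'" using rep[of C' A' d'] h d' by metis
  have "pushE K E C A A' a d = pullE K E C' C A' c d'"
    unfolding pushE_def pullE_def d'_def using Emap_comp[of C A C' A' C A' c' a c "idm K A'" d] h c' d by simp
  then obtain b1 where b1: "chain_map K (A,f,B,g,C) (A',fT,BT,gT,C') a b1 c"
    using R0[OF o h(6) h(4) d d' _ _ _ mS T] h by blast
  have "pushE K E C' A' A a' d' = pullE K E C C' A c' d"
    unfolding pushE_def pullE_def d'_def using Emap_comp[of C A C' A' C' A c' a "idm K C'" a' d] h a' c' d by simp
  then obtain b2 where b2: "chain_map K (A',fT,BT,gT,C') (A,f,B,g,C) a' b2 c'"
    using R0[OF h(6) h(4) o d' d _ _ _ T mS] a' c' by blast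
  have u: "chain_map K (A',fT,BT,gT,C') (A',f',B',g',C') (idm K A') (cmp K b b2) (idm K C')"
    using chain_comp[OF b2 ch] a' c' by simp
  have v: "chain_map K (A',f',B',g',C') (A',fT,BT,gT,C') (idm K A') (cmp K b1 b') (idm K C')"
    using chain_comp[OF chi b1] a' c' by simp
  have "(A',f',B',g',C') \<in> s C' A' d'" using class_mem[OF _ _ d' T w' u v] h by simp
  then show ?thesis using confI h d' by blast
qed

lemma dsum_closed: assumes m1: "(A,f,B,g,C) \<in> conflations K E s" and m2: "(A',f',B',g',C') \<in> conflations K E s"
  and bA: "biproduct K A A' SA ia1 ia2 qa1 qa2" and bB: "biproduct K B B' SB ib1 ib2 qb1 qb2"
  and bC: "biproduct K C C' SC ic1 ic2 qc1 qc2"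
  shows "(SA, hadd K SA SB (cmp K ib1 (cmp K f qa1)) (cmp K ib2 (cmp K f' qa2)),
          SB, hadd K SB SC (cmp K ic1 (cmp K g qb1)) (cmp K ic2 (cmp K g' qb2)), SC) \<in> conflations K E s"
proof -
  define F where "F = hadd K SA SB (cmp K ib1 (cmp K f qa1)) (cmp K ib2 (cmp K f' qa2))"
  define G where "G = hadd K SB SC (cmp K ic1 (cmp K g qb1)) (cmp K ic2 (cmp K g' qb2))"
  obtain d where o1: "C\<in>Ob K" "A\<in>Ob K" and d: "d\<in>Ecar E C A" and mS: "(A,f,B,g,C) \<in> s C A d"
    and w1: "weak_kc_pair K (A,f,B,g,C)" using confD[OF m1] by metis
  obtain d' where o2: "C'\<in>Ob K" "A'\<in>Ob K" and d': "d'\<in>Ecar E C' A'" and mS': "(A',f',B',g',C') \<in> s C' A' d'"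
    and w2: "weak_kc_pair K (A',f',B',g',C')" using confD[OF m2] by metis
  note W1 = wkcD[OF w1] and W2 = wkcD[OF w2]
  note BA = bpD[OF bA] and BB = bpD[OF bB] and BC = bpD[OF bC]
  note dF = diag[OF bA bB W1(1) W2(1) W1(2) W2(2) W1(4) W2(4) F_def]
  note dG = diag[OF bB bC W1(2) W2(2) W1(3) W2(3) W1(5) W2(5) G_def]
  have wS: "weak_kc_pair K (SA,F,SB,G,SC)" using wkc_sum[OF w1 w2 bA bB bC F_def G_def] .
  define e1 where "e1 = Emap E C A SC SA qc1 ia1 d"
  define e2 where "e2 = Emap E C' A' SC SA qc2 ia2 d'"
  have e1c: "e1 \<in> Ecar E SC SA" unfolding e1_def using Emap_car[of C A SC SA qc1 ia1 d] BA BC o1 d by simp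
  have e2c: "e2 \<in> Ecar E SC SA" unfolding e2_def using Emap_car[of C' A' SC SA qc2 ia2 d'] BA BC o2 d' by simp
  define D where "D = Eadd E SC SA e1 e2"
  have Dc: "D \<in> Ecar E SC SA" unfolding D_def using Eadd_car e1c e2c BA BC by simp
  have ED: "\<And>Wo V c a. Wo\<in>Ob K \<Longrightarrow> V\<in>Ob K \<Longrightarrow> c\<in>Hom K Wo SC \<Longrightarrow> a\<in>Hom K SA V \<Longrightarrow>
     Emap E SC SA Wo V c a D = Eadd E Wo V (Emap E C A Wo V (cmp K qc1 c) (cmp K a ia1) d)
         (Emap E C' A' Wo V (cmp K qc2 c) (cmp K a ia2) d')"
  proof -
    fix Wo V c a assume a: "Wo\<in>Ob K" "V\<in>Ob K" "c\<in>Hom K Wo SC" "a\<in>Hom K SA V"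
    show "Emap E SC SA Wo V c a D = Eadd E Wo V (Emap E C A Wo V (cmp K qc1 c) (cmp K a ia1) d)
         (Emap E C' A' Wo V (cmp K qc2 c) (cmp K a ia2) d')"
    unfolding D_def
    using Emap_add[OF BC(1) BA(1) a e1c e2c] e1_def e2_def
      Emap_comp[of C A SC SA Wo V qc1 ia1 c a d] Emap_comp[of C' A' SC SA Wo V qc2 ia2 c a d'] a BA BC o1 o2 d d' by simp
  qed
  obtain fT BT gT where T: "(SA,fT,BT,gT,SC) \<in> s SC SA D" using rep[of SC SA D] BA BC Dc by metis
  have "pushE K E C A SA ia1 d = pullE K E SC C SA ic1 D"
    unfolding pushE_def pullE_def using ED[of C SA ic1 "idm K SA"] BA BC o1 o2 Emap_zero_c[of C' A' C SA ia2 d'] d'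
      Emap_car[of C A C SA "idm K C" ia1 d] d Eadd_0r by simp
  then obtain b1 where c1: "chain_map K (A,f,B,g,C) (SA,fT,BT,gT,SC) ia1 b1 ic1"
    using R0[OF o1 BC(1) BA(1) d Dc BA(2) BC(2) _ mS T] by blast
  have "pushE K E C' A' SA ia2 d' = pullE K E SC C' SA ic2 D"
    unfolding pushE_def pullE_def using ED[of C' SA ic2 "idm K SA"] BA BC o1 o2 Emap_zero_c[of C A C' SA ia1 d] d
      Emap_car[of C' A' C' SA "idm K C'" ia2 d'] d' Eadd_0l by simp
  then obtain b2 where c2: "chain_map K (A',f',B',g',C') (SA,fT,BT,gT,SC) ia2 b2 ic2"
    using R0[OF o2 BC(1) BA(1) d' Dc BA(3) BC(3) _ mS' T] by blast
  have "pushE K E SC SA A qa1 D = pullE K E C SC A qc1 d"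
    unfolding pushE_def pullE_def using ED[of SC A "idm K SC" qa1] BA BC o1 o2 Emap_zero_a[of C' A' SC A qc2 d'] d'
      Emap_car[of C A SC A qc1 "idm K A" d] d Eadd_0r by simp
  then obtain q1 where c3: "chain_map K (SA,fT,BT,gT,SC) (A,f,B,g,C) qa1 q1 qc1"
    using R0[OF BC(1) BA(1) o1 Dc d BA(4) BC(4) _ T mS] by blast
  have "pushE K E SC SA A' qa2 D = pullE K E C' SC A' qc2 d'"
    unfolding pushE_def pullE_def using ED[of SC A' "idm K SC" qa2] BA BC o1 o2 Emap_zero_a[of C A SC A' qc1 d] d
      Emap_car[of C' A' SC A' qc2 "idm K A'" d'] d' Eadd_0l by simp
  then obtain q2 where c4: "chain_map K (SA,fT,BT,gT,SC) (A',f',B',g',C') qa2 q2 qc2"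
    using R0[OF BC(1) BA(1) o2 Dc d' BA(5) BC(5) _ T mS'] by blast
  note h1 = chainD[OF c1] and h2 = chainD[OF c2] and h3 = chainD[OF c3] and h4 = chainD[OF c4]
  note cu = copair[OF bB W1(2) W2(2) h1(5) h1(12) h2(12)]
  define u where "u = hadd K SB BT (cmp K b1 qb1) (cmp K b2 qb2)"
  note pv = pair[OF bB W1(2) W2(2) h1(5) h3(12) h4(12)]
  define v where "v = hadd K BT SB (cmp K ib1 q1) (cmp K ib2 q2)"
  have u: "u \<in> Hom K SB BT" unfolding u_def using cu by simp
  have v: "v \<in> Hom K BT SB" unfolding v_def using pv by simp
  have uF: "cmp K u F \<in> Hom K SA BT" using cmp_hom[of SA SB BT F u] u dF BA BB h1 by simp
  have uF1: "cmp K u F = cmp K fT (idm K SA)"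
  proof -
    have "cmp K u F = fT"
    proof (rule bp_outext[OF bA W1(1) W2(1) h1(5) uF h1(9)])
      show "cmp K (cmp K u F) ia1 = cmp K fT ia1"
        using assoc[of A SA SB BT ia1 F u] assoc[of A B SB BT f ib1 u] dF cu h1 u BA BB W1 unfolding u_def by simp
      show "cmp K (cmp K u F) ia2 = cmp K fT ia2"
        using assoc[of A' SA SB BT ia2 F u] assoc[of A' B' SB BT f' ib2 u] dF cu h2 u BA BB W2 unfolding u_def by simp
    qed
    then show ?thesis using h1 by simp
  qed
  have gu: "cmp K gT u \<in> Hom K SB SC" using cmp_hom[of SB BT SC u gT] u h1 BB by simp
  have uG1: "cmp K (idm K SC) G = cmp K gT u"
  proof -
    have "cmp K gT u = G"
    proof (rule bp_outext[OF bB W1(2) W2(2) h1(6) gu dG(1)])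
      show "cmp K (cmp K gT u) ib1 = cmp K G ib1"
        using assoc[of B SB BT SC ib1 u gT] dG cu h1 u BB unfolding u_def by simp
      show "cmp K (cmp K gT u) ib2 = cmp K G ib2"
        using assoc[of B' SB BT SC ib2 u gT] dG cu h1 h2 u BB unfolding u_def by simp
    qed
    then show ?thesis using dG BB BC by simp
  qed
  have cU: "chain_map K (SA,F,SB,G,SC) (SA,fT,BT,gT,SC) (idm K SA) u (idm K SC)"
    unfolding chain_map_def using uF1 uG1 u h1 dF dG BA BB by simp
  have vf: "cmp K v fT \<in> Hom K SA SB" using cmp_hom[of SA BT SB fT v] v h1 BB by simp
  have vF1: "cmp K v fT = cmp K F (idm K SA)"
  proof -
    have "cmp K v fT = F"
    proof (rule bp_inext[OF bB W1(2) W2(2) h1(4) vf dF(1)])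
      show "cmp K qb1 (cmp K v fT) = cmp K qb1 F"
        using assoc[of SA BT SB B fT v qb1] dF pv h1 h3 v BB unfolding v_def by simp
      show "cmp K qb2 (cmp K v fT) = cmp K qb2 F"
        using assoc[of SA BT SB B' fT v qb2] dF pv h1 h4 v BB unfolding v_def by simp
    qed
    then show ?thesis using dF BA BB by simp
  qed
  have Gv: "cmp K G v \<in> Hom K BT SC" using cmp_hom[of BT SB SC v G] v dG h1 BB by simp
  have vG1: "cmp K (idm K SC) gT = cmp K G v"
  proof -
    have "cmp K G v = gT"
    proof (rule bp_inext[OF bC W1(3) W2(3) h1(5) Gv h1(10)])
      show "cmp K qc1 (cmp K G v) = cmp K qc1 gT"
        using assoc[of BT SB SC C v G qc1] assoc[of BT SB B C v qb1 g] dG pv h1 h3 v BB BC W1 unfolding v_def by simp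
      show "cmp K qc2 (cmp K G v) = cmp K qc2 gT"
        using assoc[of BT SB SC C' v G qc2] assoc[of BT SB B' C' v qb2 g'] dG pv h1 h4 v BB BC W2 unfolding v_def by simp
    qed
    then show ?thesis using h1 by simp
  qed
  have cV: "chain_map K (SA,fT,BT,gT,SC) (SA,F,SB,G,SC) (idm K SA) v (idm K SC)"
    unfolding chain_map_def using vF1 vG1 v h1 dF dG BA BB by simp
  have "(SA,F,SB,G,SC) \<in> s SC SA D" using class_mem[OF BC(1) BA(1) Dc T wS cV cU] .
  then show ?thesis unfolding F_def[symmetric] G_def[symmetric] using confI BA BC Dc by blast
qed

end


context padd begin
lemma wkc_kc: assumes w: "weak_kc_pair K (A,f,B,g,C)" and mo: "is_mono K A B f" and ep: "is_epi K B C g"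
  shows "kc_pair K (A,f,B,g,C)"
proof -
  note W = wkcD[OF w]
  have "is_kernel K A B C f g" unfolding is_kernel_def
  proof (intro conjI ballI impI)
    fix X x assume X: "X\<in>Ob K" and x: "x\<in>Hom K X B" and gx: "cmp K g x = hzero K X C"
    obtain y where y: "y\<in>Hom K X A" "x = cmp K f y" using W(7)[OF X x gx] by blast
    have "\<And>y'. y' \<in> Hom K X A \<Longrightarrow> cmp K f y' = x \<Longrightarrow> y' = y"
      using y mo X unfolding is_mono_def by blast
    then show "\<exists>!y. y \<in> Hom K X A \<and> cmp K f y = x" using y by blast
  qed (use W(1-6) in auto)
  moreover have "is_cokernel K A B C f g" unfolding is_cokernel_def
  proof (intro conjI ballI impI)
    fix X x assume X: "X\<in>Ob K" and x: "x\<in>Hom K B X" and gx: "cmp K x f = hzero K A X"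
    obtain y where y: "y\<in>Hom K C X" "x = cmp K y g" using W(8)[OF X x gx] by blast
    have "\<And>y'. y' \<in> Hom K C X \<Longrightarrow> cmp K y' g = x \<Longrightarrow> y' = y"
      using y ep X unfolding is_epi_def by blast
    then show "\<exists>!y. y \<in> Hom K C X \<and> cmp K y g = x" using y by blast
  qed (use W(1-6) in auto)
  ultimately show ?thesis unfolding kc_pair_def using W by simp
qed
end

locale wet2 = wet +
  assumes me: "\<forall>A f B g C. (A, f, B, g, C) \<in> conflations K E s \<longrightarrow> is_mono K A B f \<and> is_epi K B C g"
begin

lemma conf_kc: "(A,f,B,g,C) \<in> conflations K E s \<Longrightarrow> kc_pair K (A,f,B,g,C)"
proof -
  assume m: "(A,f,B,g,C) \<in> conflations K E s"
  obtain d where "weak_kc_pair K (A,f,B,g,C)" using confD[OF m] by metis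
  then show ?thesis using wkc_kc me m by blast
qed

lemma zero_id: assumes Z: "zero_obj K Z" shows "idm K Z = hzero K Z Z"
proof -
  have o: "Z\<in>Ob K" using Z unfolding zero_obj_def by simp
  then have "\<exists>!f. f \<in> Hom K Z Z" using Z unfolding zero_obj_def by blast
  then show ?thesis using o idm_hom[OF o] zero_hom[OF o o] by blast
qed

lemma rz: "zero_obj K Z \<Longrightarrow> A\<in>Ob K \<Longrightarrow> (A, idm K A, A, hzero K A Z, Z) \<in> s Z A (Ezero E Z A) \<and>
        (Z, hzero K Z A, A, idm K A, A) \<in> s A Z (Ezero E A Z)"
  using exr[unfolded exact_realization_def, THEN conjunct2, THEN conjunct2] by blast

lemma zero_conf: assumes Z: "zero_obj K Z" shows "(Z, hzero K Z Z, Z, hzero K Z Z, Z) \<in> conflations K E s"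
proof -
  have o: "Z\<in>Ob K" using Z unfolding zero_obj_def by simp
  show ?thesis using rz[OF Z o] zero_id[OF Z] confI[OF o o Ezero_car[OF o o]] by simp
qed

lemma id_adm: assumes A: "A\<in>Ob K"
  shows "adm_monic K (conflations K E s) A (idm K A) A \<and> adm_epic K (conflations K E s) A (idm K A) A"
proof -
  obtain Z where Z: "zero_obj K Z" using addc unfolding additive_category_def by blast
  have o: "Z\<in>Ob K" using Z unfolding zero_obj_def by simp
  show ?thesis unfolding adm_monic_def adm_epic_def
    using rz[OF Z A] confI[OF o A Ezero_car[OF o A]] confI[OF A o Ezero_car[OF A o]] by blast
qed

lemma pushout_ex: assumes m: "(A,i,B,d,C) \<in> conflations K E s" and A': "A'\<in>Ob K" and a: "a\<in>Hom K A A'"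
  shows "\<exists>P f' a'. is_pushout K A B A' P i a f' a' \<and> adm_monic K (conflations K E s) A' f' P"
proof -
  obtain del where o: "C\<in>Ob K" "A\<in>Ob K" and del: "del\<in>Ecar E C A" and mS: "(A,i,B,d,C) \<in> s C A del"
    and w: "weak_kc_pair K (A,i,B,d,C)" using confD[OF m] by metis
  note W = wkcD[OF w]
  define r where "r = pushE K E C A A' a del"
  have r: "r \<in> Ecar E C A'" unfolding r_def pushE_def using Emap_car[of C A C A' "idm K C" a del] o A' a del by simp
  obtain fT P gT where T: "(A',fT,P,gT,C) \<in> s C A' r" using rep[OF o(1) A' r] by metis
  have wT: "weak_kc_pair K (A',fT,P,gT,C)" using memD[OF o(1) A' r T] by simp
  note WT = wkcD[OF wT]
  obtain b where ch: "chain_map K (A,i,B,d,C) (A',fT,P,gT,C) a b (idm K C)"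
    and mc: "\<And>SS j1 j2 p1 p2. biproduct K A' B SS j1 j2 p1 p2 \<Longrightarrow>
        mcocone K A A' P a i fT b SS j1 j2 p1 p2 \<in> s P A (pullE K E C P A gT del)"
    using ea2op[unfolded EA2op_def] o A' del a T[unfolded r_def] mS by blast
  note h = chainD[OF ch]
  obtain SS j1 j2 p1 p2 where bp: "biproduct K A' B SS j1 j2 p1 p2"
    using addc A' W unfolding additive_category_def by blast
  note BP = bpD[OF bp]
  define F where "F = hadd K A SS (cmp K j1 a) (cmp K j2 i)"
  define G where "G = hadd K SS P (cmp K (hneg K A' P fT) p1) (cmp K b p2)"
  have pe: "pullE K E C P A gT del \<in> Ecar E P A"
    unfolding pullE_def using Emap_car[of C A P A gT "idm K A" del] o WT del by simp
  have "(A,F,SS,G,P) \<in> conflations K E s"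
    using mc[OF bp] confI[OF WT(2) o(2) pe] unfolding mcocone_def F_def G_def by simp
  then have kc: "kc_pair K (A,F,SS,G,P)" by (rule conf_kc)
  then have cok: "is_cokernel K A SS P F G" unfolding kc_pair_def by simp
  have nf: "hneg K A' P fT \<in> Hom K A' P" using neg_hom WT by simp
  note cG = copair[OF bp A' W(2) WT(2) nf h(12)]
  have G1: "cmp K G j1 = hneg K A' P fT" and G2: "cmp K G j2 = b" using cG unfolding G_def by auto
  have Gh: "G \<in> Hom K SS P" using cG unfolding G_def by simp
  have "is_pushout K A B A' P i a fT b" unfolding is_pushout_def
  proof (intro conjI ballI impI)
    show "P\<in>Ob K" "fT \<in> Hom K A' P" "b\<in>Hom K B P" using WT h by auto
    show "cmp K b i = cmp K fT a" using h by simp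
  next
    fix X u v assume X: "X\<in>Ob K" and u: "u\<in>Hom K B X" and v: "v\<in>Hom K A' X" and uv: "cmp K u i = cmp K v a"
    have nv: "hneg K A' X v \<in> Hom K A' X" using neg_hom A' X v by simp
    note cx = copair[OF bp A' W(2) X nv u]
    define x where "x = hadd K SS X (cmp K (hneg K A' X v) p1) (cmp K u p2)"
    have x: "x \<in> Hom K SS X" and x1: "cmp K x j1 = hneg K A' X v" and x2: "cmp K x j2 = u"
      using cx unfolding x_def by auto
    have ja: "cmp K j1 a \<in> Hom K A SS" using cmp_hom[of A A' SS a j1] a A' o BP by simp
    have ji: "cmp K j2 i \<in> Hom K A SS" using cmp_hom[of A B SS i j2] W BP by simp
    have "cmp K x F = hadd K A X (cmp K x (cmp K j1 a)) (cmp K x (cmp K j2 i))"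
      unfolding F_def using distl[of A SS X "cmp K j1 a" "cmp K j2 i" x] ja ji x o BP X by simp
    also have "\<dots> = hadd K A X (cmp K (hneg K A' X v) a) (cmp K u i)"
      using assoc[of A A' SS X a j1 x] assoc[of A B SS X i j2 x] x1 x2 x a A' W BP X by simp
    also have "\<dots> = hzero K A X" using cmp_negl[of A A' X a v] uv a v A' X o cmp_hom[of A A' X a v] by simp
    finally have xF: "cmp K x F = hzero K A X" .
    obtain w where w: "w\<in>Hom K P X" "cmp K w G = x" and wu: "\<And>w'. w'\<in>Hom K P X \<Longrightarrow> cmp K w' G = x \<Longrightarrow> w' = w"
      using cok[unfolded is_cokernel_def] X x xF by metis
    have key: "\<And>w'. w'\<in>Hom K P X \<Longrightarrow> (cmp K w' b = u \<and> cmp K w' fT = v) \<longleftrightarrow> cmp K w' G = x"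
    proof -
      fix w' assume w': "w'\<in>Hom K P X"
      have e1: "cmp K (cmp K w' G) j1 = hneg K A' X (cmp K w' fT)"
        using assoc[of A' SS P X j1 G w'] G1 cmp_negr[of A' P X fT w'] Gh w' BP A' WT X h by simp
      have e2: "cmp K (cmp K w' G) j2 = cmp K w' b"
        using assoc[of B SS P X j2 G w'] G2 Gh w' BP W WT X by simp
      have wG: "cmp K w' G \<in> Hom K SS X" using cmp_hom[of SS P X G w'] Gh w' BP WT X by simp
      have wf: "cmp K w' fT \<in> Hom K A' X" using cmp_hom[of A' P X fT w'] w' A' WT X by simp
      show "(cmp K w' b = u \<and> cmp K w' fT = v) \<longleftrightarrow> cmp K w' G = x"
      proof
        assume "cmp K w' b = u \<and> cmp K w' fT = v"
        then show "cmp K w' G = x" using bp_outext[OF bp A' W(2) X wG x] e1 e2 x1 x2 by simp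
      next
        assume "cmp K w' G = x"
        then have "hneg K A' X (cmp K w' fT) = hneg K A' X v" "cmp K w' b = u" using e1 e2 x1 x2 by auto
        then show "cmp K w' b = u \<and> cmp K w' fT = v" using neg_neg[OF A' X wf] neg_neg[OF A' X v] by metis
      qed
    qed
    show "\<exists>!w. w \<in> Hom K P X \<and> cmp K w b = u \<and> cmp K w fT = v"
      using key w wu by blast
  qed
  moreover have "adm_monic K (conflations K E s) A' fT P"
    unfolding adm_monic_def using confI[OF o(1) A' r T] by blast
  ultimately show ?thesis by blast
qed

lemma pullback_ex: assumes m: "(A,i,B,d,C) \<in> conflations K E s" and C': "C'\<in>Ob K" and c: "c\<in>Hom K C' C"
  shows "\<exists>P d' c'. is_pullback K B C C' P d c d' c' \<and> adm_epic K (conflations K E s) P d' C'"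
proof -
  obtain del where o: "C\<in>Ob K" "A\<in>Ob K" and del: "del\<in>Ecar E C A" and mS: "(A,i,B,d,C) \<in> s C A del"
    and w: "weak_kc_pair K (A,i,B,d,C)" using confD[OF m] by metis
  note W = wkcD[OF w]
  define r where "r = pullE K E C C' A c del"
  have r: "r \<in> Ecar E C' A" unfolding r_def pullE_def using Emap_car[of C A C' A c "idm K A" del] o C' c del by simp
  obtain fT P gT where T: "(A,fT,P,gT,C') \<in> s C' A r" using rep[OF C' o(2) r] by metis
  have wT: "weak_kc_pair K (A,fT,P,gT,C')" using memD[OF C' o(2) r T] by simp
  note WT = wkcD[OF wT]
  obtain b where ch: "chain_map K (A,fT,P,gT,C') (A,i,B,d,C) (idm K A) b c"
    and mc: "\<And>SS j1 j2 p1 p2. biproduct K C' B SS j1 j2 p1 p2 \<Longrightarrow>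
        mcone K P C' C gT b c d SS j1 j2 p1 p2 \<in> s C P (pushE K E C A P fT del)"
    using ea2[unfolded EA2_def] o C' del c T[unfolded r_def] mS by blast
  note h = chainD[OF ch]
  obtain SS j1 j2 p1 p2 where bp: "biproduct K C' B SS j1 j2 p1 p2"
    using addc C' W unfolding additive_category_def by blast
  note BP = bpD[OF bp]
  define F where "F = hadd K P SS (cmp K j1 (hneg K P C' gT)) (cmp K j2 b)"
  define G where "G = hadd K SS C (cmp K c p1) (cmp K d p2)"
  have pe: "pushE K E C A P fT del \<in> Ecar E C P"
    unfolding pushE_def using Emap_car[of C A C P "idm K C" fT del] o WT del by simp
  have "(P,F,SS,G,C) \<in> conflations K E s"
    using mc[OF bp] confI[OF o(1) WT(2) pe] unfolding mcone_def F_def G_def by simp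
  then have kc: "kc_pair K (P,F,SS,G,C)" by (rule conf_kc)
  then have ker: "is_kernel K P SS C F G" unfolding kc_pair_def by simp
  have ng: "hneg K P C' gT \<in> Hom K P C'" using neg_hom WT by simp
  note pF = pair[OF bp C' W(2) WT(2) ng h(12)]
  have F1: "cmp K p1 F = hneg K P C' gT" and F2: "cmp K p2 F = b" using pF unfolding F_def by auto
  have Fh: "F \<in> Hom K P SS" using pF unfolding F_def by simp
  have "is_pullback K B C C' P d c gT b" unfolding is_pullback_def
  proof (intro conjI ballI impI)
    show "P\<in>Ob K" "gT \<in> Hom K P C'" "b\<in>Hom K P B" using WT h by auto
    show "cmp K d b = cmp K c gT" using h by simp
  next
    fix X u v assume X: "X\<in>Ob K" and u: "u\<in>Hom K X B" and v: "v\<in>Hom K X C'" and uv: "cmp K d u = cmp K c v"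
    have nv: "hneg K X C' v \<in> Hom K X C'" using neg_hom C' X v by simp
    note px = pair[OF bp C' W(2) X nv u]
    define x where "x = hadd K X SS (cmp K j1 (hneg K X C' v)) (cmp K j2 u)"
    have x: "x \<in> Hom K X SS" and x1: "cmp K p1 x = hneg K X C' v" and x2: "cmp K p2 x = u"
      using px unfolding x_def by auto
    have cp: "cmp K c p1 \<in> Hom K SS C" using cmp_hom[of SS C' C p1 c] c C' o BP by simp
    have dp: "cmp K d p2 \<in> Hom K SS C" using cmp_hom[of SS B C p2 d] W BP by simp
    have "cmp K G x = hadd K X C (cmp K (cmp K c p1) x) (cmp K (cmp K d p2) x)"
      unfolding G_def using distr[of X SS C x "cmp K c p1" "cmp K d p2"] cp dp x o BP X by simp
    also have "\<dots> = hadd K X C (cmp K c (hneg K X C' v)) (cmp K d u)"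
      using assoc[of X SS C' C x p1 c] assoc[of X SS B C x p2 d] x1 x2 x c C' W BP X o by simp
    also have "\<dots> = hzero K X C" using cmp_negr[of X C' C v c] uv c v C' X o cmp_hom[of X C' C v c] by simp
    finally have Gx: "cmp K G x = hzero K X C" .
    obtain w where w: "w\<in>Hom K X P" "cmp K F w = x" and wu: "\<And>w'. w'\<in>Hom K X P \<Longrightarrow> cmp K F w' = x \<Longrightarrow> w' = w"
      using ker[unfolded is_kernel_def] X x Gx by metis
    have key: "\<And>w'. w'\<in>Hom K X P \<Longrightarrow> (cmp K b w' = u \<and> cmp K gT w' = v) \<longleftrightarrow> cmp K F w' = x"
    proof -
      fix w' assume w': "w'\<in>Hom K X P"
      have e1: "cmp K p1 (cmp K F w') = hneg K X C' (cmp K gT w')"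
        using assoc[of X P SS C' w' F p1] F1 cmp_negl[of X P C' w' gT] Fh w' BP C' WT X h by simp
      have e2: "cmp K p2 (cmp K F w') = cmp K b w'"
        using assoc[of X P SS B w' F p2] F2 Fh w' BP W WT X by simp
      have wF: "cmp K F w' \<in> Hom K X SS" using cmp_hom[of X P SS w' F] Fh w' BP WT X by simp
      have wg: "cmp K gT w' \<in> Hom K X C'" using cmp_hom[of X P C' w' gT] w' C' WT X by simp
      show "(cmp K b w' = u \<and> cmp K gT w' = v) \<longleftrightarrow> cmp K F w' = x"
      proof
        assume "cmp K b w' = u \<and> cmp K gT w' = v"
        then show "cmp K F w' = x" using bp_inext[OF bp C' W(2) X wF x] e1 e2 x1 x2 by simp
      next
        assume "cmp K F w' = x"
        then have "hneg K X C' (cmp K gT w') = hneg K X C' v" "cmp K b w' = u" using e1 e2 x1 x2 by auto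
        then show "cmp K b w' = u \<and> cmp K gT w' = v" using neg_neg[OF X C' wg] neg_neg[OF X C' v] by metis
      qed
    qed
    show "\<exists>!w. w \<in> Hom K X P \<and> cmp K b w = u \<and> cmp K gT w = v"
      using key w wu by blast
  qed
  moreover have "adm_epic K (conflations K E s) P gT C'"
    unfolding adm_epic_def using confI[OF C' o(2) r T] by blast
  ultimately show ?thesis by blast
qed

end

theorem mainTheorem11:
  fixes K :: "('o,'m) precat" and E :: "('o,'m,'e) bifun" and s :: "('o,'m,'e) realiz"
  assumes "weakly_extriangulated K E s"
    and "\<forall>A f B g C. (A, f, B, g, C) \<in> conflations K E s \<longrightarrow>
            is_mono K A B f \<and> is_epi K B C g"
  shows "weakly_exact K (conflations K E s)"
proof -
  interpret wet2 K E s using assms by (unfold_locales) auto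
  show ?thesis unfolding weakly_exact_def
  proof (intro conjI)
    show "\<forall>S\<in>conflations K E s. kc_pair K S"
    proof
      fix S assume S: "S \<in> conflations K E s"
      obtain A f B g C where "S = (A,f,B,g,C)" by (cases S) auto
      then show "kc_pair K S" using conf_kc S by simp
    qed
    show "\<forall>S S'. S \<in> conflations K E s \<and> seq_iso K S S' \<longrightarrow> S' \<in> conflations K E s"
    proof (intro allI impI)
      fix S S' assume a: "S \<in> conflations K E s \<and> seq_iso K S S'"
      obtain A f B g C where 1: "S = (A,f,B,g,C)" by (cases S) auto
      obtain A' f' B' g' C' where 2: "S' = (A',f',B',g',C')" by (cases S') auto
      show "S' \<in> conflations K E s" using iso_closed a 1 2 by blast
    qed
    show "closed_dsum K (conflations K E s)"
      unfolding closed_dsum_def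
    proof (intro conjI allI impI)
      fix A f B g C A' f' B' g' C' SA ia1 ia2 qa1 qa2 SB ib1 ib2 qb1 qb2 SC ic1 ic2 qc1 qc2
      assume m: "(A, f, B, g, C) \<in> conflations K E s" "(A', f', B', g', C') \<in> conflations K E s"
        and b: "biproduct K A A' SA ia1 ia2 qa1 qa2 \<and> biproduct K B B' SB ib1 ib2 qb1 qb2 \<and> biproduct K C C' SC ic1 ic2 qc1 qc2"
      then show "(SA, hadd K SA SB (cmp K ib1 (cmp K f qa1)) (cmp K ib2 (cmp K f' qa2)),
          SB, hadd K SB SC (cmp K ic1 (cmp K g qb1)) (cmp K ic2 (cmp K g' qb2)), SC) \<in> conflations K E s"
        using dsum_closed[OF m(1) m(2)] b by blast
    next
      fix Z assume "zero_obj K Z" then show "(Z, hzero K Z Z, Z, hzero K Z Z, Z) \<in> conflations K E s"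
        by (rule zero_conf)
    qed
    show "\<forall>A\<in>Ob K. adm_monic K (conflations K E s) A (idm K A) A \<and> adm_epic K (conflations K E s) A (idm K A) A"
      using id_adm by blast
    show "\<forall>A i B d C A' a. (A, i, B, d, C) \<in> conflations K E s \<and> A' \<in> Ob K \<and> a \<in> Hom K A A' \<longrightarrow>
        (\<exists>P f' a'. is_pushout K A B A' P i a f' a' \<and> adm_monic K (conflations K E s) A' f' P)"
      using pushout_ex by blast
    show "\<forall>A i B d C C' c. (A, i, B, d, C) \<in> conflations K E s \<and> C' \<in> Ob K \<and> c \<in> Hom K C' C \<longrightarrow>
        (\<exists>P d' c'. is_pullback K B C C' P d c d' c' \<and> adm_epic K (conflations K E s) P d' C')"
      using pullback_ex by blast
  qed
qed

end
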